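(* Let $G$ be a connected planar trivalent graph. Then $T_G(1)$ equals the number of Tait colorings of $G$, where $$T_G(z)=\sum_{M}\langle G:M\rangle_2(z),$$ the sum being over all perfect matchings $M$ of $G$.
   Context: Graphs are finite and may have multiple edges; trivalent means every vertex has degree $3$. A Tait coloring of $G$ is an assignment of one of three fixed colors to each edge so that the three edges at every vertex receive three distinct colors. The $2$-factor polynomial $\langle G:M\rangle_2(z)\in\mathbb{Z}[z,z^{-1}]$ of $G$ with perfect matching $M$ is defined as follows. Embed $G$ in the $2$-sphere. For a matching edge $e=uv$, let $\alpha,\beta$ be the other two edge-ends at $u$ and $\gamma,\delta$ the other two at $v$, labelled so that in a small disk around $e$ they appear in cyclic order $\alpha,\beta,\delta,\gamma$. The $0$-resolution at $e$ deletes $e,u,v$ and joins $\alpha$ to $\gamma$ and $\beta$ to $\delta$ by disjoint arcs; the $1$-resolution joins $\alpha$ to $\delta$ and $\beta$ to $\gamma$ by two arcs crossing once. For a state $s:M\to\{0,1\}$, resolving every matching edge accordingly yields $c(s)$ immersed closed curves, and $\langle G:M\rangle_2(z)=\sum_s(-z)^{|s|}(z+z^{-1})^{c(s)}$, where $|s|$ is the number of edges assigned $1$. This is independent of the chosen embedding. *)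

theory Defs
  imports Complex_Main
begin

text \<open>A trivalent multigraph together with an embedding in an orientable surface is
encoded as a combinatorial map: a finite set of darts (edge-ends) D, a fixed-point-free
involution alpha sending a dart to the other end of its edge, and a permutation sigma
whose orbits are the vertices and which gives the cyclic (counterclockwise) order of
edge-ends around each vertex.\<close>

definition trivalent_map :: "'d set \<Rightarrow> ('d \<Rightarrow> 'd) \<Rightarrow> ('d \<Rightarrow> 'd) \<Rightarrow> bool" where
  "trivalent_map D alpha sigma \<longleftrightarrow> finite D \<and> bij_betw alpha D D \<and> bij_betw sigma D D \<and>
     (\<forall>x\<in>D. alpha (alpha x) = x \<and> alpha x \<noteq> x \<and>
             sigma x \<noteq> x \<and> sigma (sigma x) \<noteq> x \<and> sigma (sigma (sigma x)) = x)"

definition map_orbits :: "('d \<Rightarrow> 'd) \<Rightarrow> 'd set \<Rightarrow> 'd set set" where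
  "map_orbits f D = D // {(x, y). x \<in> D \<and> (\<exists>n. (f ^^ n) x = y)}"

definition connected_map :: "'d set \<Rightarrow> ('d \<Rightarrow> 'd) \<Rightarrow> ('d \<Rightarrow> 'd) \<Rightarrow> bool" where
  "connected_map D alpha sigma \<longleftrightarrow>
     (\<forall>x\<in>D. \<forall>y\<in>D. (x, y) \<in> ({(a, alpha a) | a. a \<in> D} \<union> {(a, sigma a) | a. a \<in> D})\<^sup>*)"

text \<open>Genus 0 (embedding in the sphere) for a connected map: Euler's formula V - E + F = 2,
faces being the orbits of sigma o alpha.\<close>
definition planar_map :: "'d set \<Rightarrow> ('d \<Rightarrow> 'd) \<Rightarrow> ('d \<Rightarrow> 'd) \<Rightarrow> bool" where
  "planar_map D alpha sigma \<longleftrightarrow>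
     int (card (map_orbits sigma D)) - int (card D div 2) + int (card (map_orbits (sigma \<circ> alpha) D)) = 2"

definition perfect_matching :: "'d set \<Rightarrow> ('d \<Rightarrow> 'd) \<Rightarrow> ('d \<Rightarrow> 'd) \<Rightarrow> 'd set \<Rightarrow> bool" where
  "perfect_matching D alpha sigma M \<longleftrightarrow> M \<subseteq> D \<and> (\<forall>x\<in>M. alpha x \<in> M) \<and>
     (\<forall>x\<in>D. card ({x, sigma x, sigma (sigma x)} \<inter> M) = 1)"

text \<open>Partner of a non-matching dart x under the resolution of the matching edge at its
vertex; S is the set of darts of matching edges in state 1.  For a matching dart d at u
with alpha d at v, the ends alpha = sigma d, beta = sigma^2 d, delta = sigma (alpha d),
gamma = sigma^2 (alpha d) appear in cyclic order alpha, beta, delta, gamma around the edge.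
The 0-resolution joins alpha-gamma, beta-delta; the 1-resolution joins alpha-delta, beta-gamma.\<close>
definition res_partner :: "('d \<Rightarrow> 'd) \<Rightarrow> ('d \<Rightarrow> 'd) \<Rightarrow> 'd set \<Rightarrow> 'd set \<Rightarrow> 'd \<Rightarrow> 'd" where
  "res_partner alpha sigma M S x =
     (if sigma (sigma x) \<in> M then
        (let d = sigma (sigma x) in
           if d \<in> S then sigma (alpha d) else sigma (sigma (alpha d)))
      else
        (let d = sigma x in
           if d \<in> S then sigma (sigma (alpha d)) else sigma (alpha d)))"

text \<open>Number of closed curves of the state: components of the graph on non-matching darts
whose links are the remaining edges and the resolution arcs.\<close>
definition num_curves :: "'d set \<Rightarrow> ('d \<Rightarrow> 'd) \<Rightarrow> ('d \<Rightarrow> 'd) \<Rightarrow> 'd set \<Rightarrow> 'd set \<Rightarrow> nat" where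
  "num_curves D alpha sigma M S =
     card ((D - M) // (({(x, alpha x) | x. x \<in> D - M} \<union>
                         {(x, res_partner alpha sigma M S x) | x. x \<in> D - M})\<^sup>*))"

text \<open>The 2-factor polynomial, as a function of z (evaluation of the Laurent polynomial).
States s are represented by the set S of darts of matching edges assigned 1,
so |s| = card S div 2.\<close>
definition two_factor_poly :: "'d set \<Rightarrow> ('d \<Rightarrow> 'd) \<Rightarrow> ('d \<Rightarrow> 'd) \<Rightarrow> 'd set \<Rightarrow> real \<Rightarrow> real" where
  "two_factor_poly D alpha sigma M z =
     (\<Sum>S\<in>{S. S \<subseteq> M \<and> (\<forall>x\<in>S. alpha x \<in> S)}.
        (- z) ^ (card S div 2) * (z + inverse z) ^ num_curves D alpha sigma M S)"

definition T_poly :: "'d set \<Rightarrow> ('d \<Rightarrow> 'd) \<Rightarrow> ('d \<Rightarrow> 'd) \<Rightarrow> real \<Rightarrow> real" where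
  "T_poly D alpha sigma z =
     (\<Sum>M\<in>{M. perfect_matching D alpha sigma M}. two_factor_poly D alpha sigma M z)"

definition tait_colorings :: "'d set \<Rightarrow> ('d \<Rightarrow> 'd) \<Rightarrow> ('d \<Rightarrow> 'd) \<Rightarrow> ('d \<Rightarrow> nat) set" where
  "tait_colorings D alpha sigma =
     {c. (\<forall>x\<in>D. c x < 3 \<and> c (alpha x) = c x \<and> c (sigma x) \<noteq> c x) \<and> (\<forall>x. x \<notin> D \<longrightarrow> c x = 0)}"

end

theory Submission
  imports Defs
begin

lemma card_closed_sets:
  assumes eq: "equiv A R" and fin: "finite A"
  shows "card {W. W \<subseteq> A \<and> (\<forall>x\<in>W. \<forall>y. (x,y)\<in>R \<longrightarrow> y\<in>W)} = 2 ^ card (A//R)"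
proof -
  have "bij_betw Union (Pow (A//R)) {W. W \<subseteq> A \<and> (\<forall>x\<in>W. \<forall>y. (x,y)\<in>R \<longrightarrow> y\<in>W)}"
  proof (rule bij_betw_imageI)
    show "inj_on Union (Pow (A//R))"
    proof (rule inj_onI)
      fix Q1 Q2 assume q1: "Q1 \<in> Pow (A//R)" and q2: "Q2 \<in> Pow (A//R)" and e: "\<Union>Q1 = \<Union>Q2"
      have *: "Qa \<subseteq> Qb" if hh: "Qa \<subseteq> A//R" "Qb \<subseteq> A//R" "\<Union>Qa = \<Union>Qb" for Qa Qb
      proof
        fix c assume c: "c \<in> Qa"
        then have cq: "c \<in> A//R" using hh by blast
        then obtain x where "x \<in> c" using in_quotient_imp_non_empty[OF eq] by blast
        then obtain c' where "c' \<in> Qb" "x \<in> c'" using hh c by blast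
        then have "c = c'" using quotient_disj[OF eq cq, of c'] hh \<open>x\<in>c\<close> by blast
        then show "c \<in> Qb" using \<open>c' \<in> Qb\<close> by simp
      qed
      show "Q1 = Q2" using *[of Q1 Q2] *[of Q2 Q1] q1 q2 e by auto
    qed
    show "Union ` Pow (A//R) = {W. W \<subseteq> A \<and> (\<forall>x\<in>W. \<forall>y. (x,y)\<in>R \<longrightarrow> y\<in>W)}"
    proof (intro set_eqI iffI)
      fix W assume "W \<in> Union ` Pow (A//R)"
      then obtain Q where Q: "Q \<subseteq> A//R" "W = \<Union>Q" by auto
      have "W \<subseteq> A" using Q in_quotient_imp_subset[OF eq] by blast
      moreover have "\<forall>x\<in>W. \<forall>y. (x,y)\<in>R \<longrightarrow> y\<in>W"
        using Q in_quotient_imp_closed[OF eq] by blast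
      ultimately show "W \<in> {W. W \<subseteq> A \<and> (\<forall>x\<in>W. \<forall>y. (x,y)\<in>R \<longrightarrow> y\<in>W)}" by simp
    next
      fix W assume W: "W \<in> {W. W \<subseteq> A \<and> (\<forall>x\<in>W. \<forall>y. (x,y)\<in>R \<longrightarrow> y\<in>W)}"
      let ?Q = "(\<lambda>x. R``{x}) ` W"
      have "?Q \<subseteq> A//R" using W by (auto intro: quotientI)
      moreover have "\<Union>?Q = W"
      proof
        show "\<Union>?Q \<subseteq> W" using W by blast
        show "W \<subseteq> \<Union>?Q" using W eq unfolding equiv_def refl_on_def by blast
      qed
      ultimately show "W \<in> Union ` Pow (A//R)" by blast
    qed
  qed
  then have "card {W. W \<subseteq> A \<and> (\<forall>x\<in>W. \<forall>y. (x,y)\<in>R \<longrightarrow> y\<in>W)} = card (Pow (A//R))"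
    by (simp add: bij_betw_same_card)
  also have "\<dots> = 2 ^ card (A//R)"
    using fin by (simp add: card_Pow finite_quotient[OF fin] equiv_type[OF eq])
  finally show ?thesis .
qed

lemma funpow_in: "f ` D \<subseteq> D \<Longrightarrow> x \<in> D \<Longrightarrow> (f ^^ n) x \<in> D"
  by (induction n) auto

lemma funpow_inj:
  assumes "inj_on f D" "f ` D \<subseteq> D" "x \<in> D" "y \<in> D" "(f ^^ n) x = (f ^^ n) y"
  shows "x = y"
  using assms(5)
proof (induction n)
  case 0 then show ?case by simp
next
  case (Suc n)
  have "(f ^^ n) x = (f ^^ n) y"
    using Suc.prems assms(1) funpow_in[OF assms(2) assms(3), of n] funpow_in[OF assms(2) assms(4), of n]
    by (auto dest: inj_onD)
  then show ?case by (rule Suc.IH)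
qed

lemma funpow_period:
  assumes fin: "finite D" and im: "f ` D \<subseteq> D" and inj: "inj_on f D" and x: "x \<in> D"
  shows "\<exists>k>0. (f ^^ k) x = x"
proof -
  let ?g = "\<lambda>n. (f ^^ n) x"
  have sub: "?g ` {..card D} \<subseteq> D" using funpow_in[OF im x] by auto
  have "\<not> inj_on ?g {..card D}"
  proof
    assume "inj_on ?g {..card D}"
    then have "card (?g ` {..card D}) = card D + 1" by (simp add: card_image)
    moreover have "card (?g ` {..card D}) \<le> card D" using card_mono[OF fin sub] .
    ultimately show False by simp
  qed
  then obtain i j where ij: "i \<noteq> j" "?g i = ?g j" unfolding inj_on_def by blast
  have "\<exists>i j. i < j \<and> ?g i = ?g j"
  proof (cases "i < j")
    case True then show ?thesis using ij by blast
  next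
    case False then have "j < i" using ij by simp
    then show ?thesis using ij by metis
  qed
  then obtain i j where ij2: "i < j" "?g i = ?g j" by blast
  have "(f ^^ j) x = (f ^^ i) ((f ^^ (j - i)) x)"
    using ij2(1) by (metis funpow_add le_add_diff_inverse less_imp_le_nat o_apply)
  then have "(f ^^ i) ((f ^^ (j - i)) x) = (f ^^ i) x" using ij2 by simp
  then have "(f ^^ (j - i)) x = x" using funpow_inj[OF inj im funpow_in[OF im x] x] by blast
  then show ?thesis using ij2(1) by (intro exI[of _ "j - i"]) simp
qed

lemma funpow_mult_fix: "(f ^^ k) x = x \<Longrightarrow> (f ^^ (k * n)) x = x"
proof (induction n)
  case 0 then show ?case by simp
next
  case (Suc n)
  have "(f ^^ (k * Suc n)) x = (f ^^ k) ((f ^^ (k * n)) x)"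
    by (simp add: funpow_add)
  then show ?case using Suc by simp
qed

definition orbrel :: "('d \<Rightarrow> 'd) \<Rightarrow> 'd set \<Rightarrow> ('d \<times> 'd) set" where
  "orbrel f D = {(x, y). x \<in> D \<and> (\<exists>n. (f ^^ n) x = y)}"

lemma orbit_equiv:
  assumes fin: "finite D" and im: "f ` D \<subseteq> D" and inj: "inj_on f D"
  shows "equiv D (orbrel f D)"
proof (rule equivI)
  show "orbrel f D \<subseteq> D \<times> D" unfolding orbrel_def using funpow_in[OF im] by auto
  show "refl_on D (orbrel f D)"
    unfolding refl_on_def orbrel_def using funpow_in[OF im] by (auto intro: exI[of _ 0])
  show "sym (orbrel f D)"
  proof (rule symI)
    fix x y assume "(x, y) \<in> orbrel f D"
    then obtain n where x: "x \<in> D" and y: "(f ^^ n) x = y" unfolding orbrel_def by auto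
    obtain k where k: "k > 0" "(f ^^ k) x = x" using funpow_period[OF fin im inj x] by blast
    have "(f ^^ ((k - 1) * n)) y = (f ^^ ((k - 1) * n + n)) x" using y by (simp add: funpow_add)
    also have "(k - 1) * n + n = k * n" using k(1) by (cases k) auto
    also have "(f ^^ (k * n)) x = x" using funpow_mult_fix[OF k(2)] .
    finally have "(f ^^ ((k - 1) * n)) y = x" .
    moreover have "y \<in> D" using y funpow_in[OF im x, of n] by simp
    ultimately show "(y, x) \<in> orbrel f D" unfolding orbrel_def by blast
  qed
  show "trans (orbrel f D)"
  proof (rule transI)
    fix x y z assume "(x, y) \<in> orbrel f D" "(y, z) \<in> orbrel f D"
    then obtain m n where "x \<in> D" "(f ^^ m) x = y" "(f ^^ n) y = z" unfolding orbrel_def by auto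
    then have "(f ^^ (n + m)) x = z" by (simp add: funpow_add)
    then show "(x, z) \<in> orbrel f D" unfolding orbrel_def using \<open>x \<in> D\<close> by blast
  qed
qed

lemma card_inv_sets:
  assumes fin: "finite D" and im: "f ` D \<subseteq> D" and inj: "inj_on f D"
  shows "card {W. W \<subseteq> D \<and> (\<forall>x\<in>W. f x \<in> W)} = 2 ^ card (map_orbits f D)"
proof -
  have 1: "(\<forall>x\<in>W. \<forall>y. (x,y)\<in>orbrel f D \<longrightarrow> y\<in>W)" if W: "W \<subseteq> D" "\<forall>x\<in>W. f x \<in> W" for W
  proof (intro ballI allI impI)
    fix x y assume "x \<in> W" "(x, y) \<in> orbrel f D"
    then obtain n where "(f ^^ n) x = y" unfolding orbrel_def by auto
    moreover have "(f ^^ n) x \<in> W"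
    proof (induction n)
      case 0 then show ?case using \<open>x \<in> W\<close> by simp
    next
      case (Suc n) then show ?case using W(2) by simp
    qed
    ultimately show "y \<in> W" by simp
  qed
  have 2: "\<forall>x\<in>W. f x \<in> W" if W: "W \<subseteq> D" "\<forall>x\<in>W. \<forall>y. (x,y)\<in>orbrel f D \<longrightarrow> y\<in>W" for W
  proof
    fix x assume x: "x \<in> W"
    have "(x, f x) \<in> orbrel f D" unfolding orbrel_def using x W(1) by (auto intro: exI[of _ 1])
    then show "f x \<in> W" using W x by blast
  qed
  have eq: "{W. W \<subseteq> D \<and> (\<forall>x\<in>W. f x \<in> W)} =
      {W. W \<subseteq> D \<and> (\<forall>x\<in>W. \<forall>y. (x,y)\<in>orbrel f D \<longrightarrow> y\<in>W)}"
  proof (rule Collect_cong)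
    fix W show "(W \<subseteq> D \<and> (\<forall>x\<in>W. f x \<in> W)) =
      (W \<subseteq> D \<and> (\<forall>x\<in>W. \<forall>y. (x,y)\<in>orbrel f D \<longrightarrow> y\<in>W))"
      using 1[of W] 2[of W] by blast
  qed
  show ?thesis unfolding eq map_orbits_def orbrel_def[symmetric]
    by (rule card_closed_sets[OF orbit_equiv[OF fin im inj] fin])
qed

lemma card_fibers:
  assumes "finite A" "\<And>y. y \<in> g ` A \<Longrightarrow> card {x \<in> A. g x = y} = k"
  shows "card A = k * card (g ` A)"
proof -
  have "card A = (\<Sum>x\<in>A. 1::nat)" by simp
  also have "\<dots> = (\<Sum>y\<in>g ` A. (\<Sum>x\<in>{x \<in> A. g x = y}. 1::nat))"
    by (rule sum.image_gen[OF assms(1)])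
  also have "\<dots> = (\<Sum>y\<in>g ` A. k)" using assms(2) by (intro sum.cong) auto
  finally show ?thesis by simp
qed

definition symd :: "'a set \<Rightarrow> 'a set \<Rightarrow> 'a set" where
  "symd A B = (A - B) \<union> (B - A)"

lemma in_symd[simp]: "x \<in> symd A B \<longleftrightarrow> (x \<in> A) \<noteq> (x \<in> B)"
  unfolding symd_def by auto

lemma card_symd:
  assumes "finite A" "finite B"
  shows "card (symd A B) + 2 * card (A \<inter> B) = card A + card B"
proof -
  have "card (symd A B) = card (A - B) + card (B - A)"
    unfolding symd_def by (rule card_Un_disjoint) (use assms in auto)
  moreover have "card (A - B) = card A - card (A \<inter> B)"
    by (rule card_Diff_subset_Int) (use assms in simp)
  moreover have "card (B - A) = card B - card (B \<inter> A)"
    by (rule card_Diff_subset_Int) (use assms in simp)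
  moreover have "card (A \<inter> B) \<le> card A" by (rule card_mono) (use assms in auto)
  moreover have "card (B \<inter> A) \<le> card B" by (rule card_mono) (use assms in auto)
  moreover have "card (B \<inter> A) = card (A \<inter> B)" by (simp add: Int_commute)
  ultimately show ?thesis by linarith
qed

lemma odd_card_symd:
  assumes "finite A" "finite B"
  shows "odd (card (symd A B)) \<longleftrightarrow> odd (card A) \<noteq> odd (card B)"
  using card_symd[OF assms] by (metis even_add even_mult_iff even_numeral)

lemma card3:
  assumes "p \<noteq> q" "q \<noteq> r" "p \<noteq> r"
  shows "card ({p, q, r} \<inter> Z) = of_bool (p \<in> Z) + of_bool (q \<in> Z) + of_bool (r \<in> Z)"
  using assms by (cases "p \<in> Z"; cases "q \<in> Z"; cases "r \<in> Z") (auto simp: card_insert_if)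

locale tmap =
  fixes D :: "'d set" and al sg :: "'d \<Rightarrow> 'd"
  assumes tm: "trivalent_map D al sg"
begin

lemma fin: "finite D" using tm unfolding trivalent_map_def by blast
lemma al_in: "x \<in> D \<Longrightarrow> al x \<in> D" using tm unfolding trivalent_map_def bij_betw_def by blast
lemma sg_in: "x \<in> D \<Longrightarrow> sg x \<in> D" using tm unfolding trivalent_map_def bij_betw_def by blast
lemma al_al[simp]: "x \<in> D \<Longrightarrow> al (al x) = x" using tm unfolding trivalent_map_def by blast
lemma al_ne: "x \<in> D \<Longrightarrow> al x \<noteq> x" using tm unfolding trivalent_map_def by blast
lemma sg_ne: "x \<in> D \<Longrightarrow> sg x \<noteq> x" using tm unfolding trivalent_map_def by blast
lemma sg2_ne: "x \<in> D \<Longrightarrow> sg (sg x) \<noteq> x" using tm unfolding trivalent_map_def by blast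
lemma sg3[simp]: "x \<in> D \<Longrightarrow> sg (sg (sg x)) = x" using tm unfolding trivalent_map_def by blast
lemma sg2_ne': "x \<in> D \<Longrightarrow> sg (sg x) \<noteq> sg x"
  using sg_ne[OF sg_in] by blast
lemma sg_inj: "x \<in> D \<Longrightarrow> y \<in> D \<Longrightarrow> sg x = sg y \<Longrightarrow> x = y"
  by (metis sg3)
lemma al_inj: "x \<in> D \<Longrightarrow> y \<in> D \<Longrightarrow> al x = al y \<Longrightarrow> x = y"
  by (metis al_al)
lemma sg_sg_in: "x \<in> D \<Longrightarrow> sg (sg x) \<in> D" by (simp add: sg_in)

lemma inj_al: "inj_on al D" by (meson al_inj inj_onI)
lemma inj_sg: "inj_on sg D" by (meson sg_inj inj_onI)
lemma im_al: "al ` D \<subseteq> D" using al_in by blast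
lemma im_sg: "sg ` D \<subseteq> D" using sg_in by blast
lemma inj_ph: "inj_on (sg \<circ> al) D"
  by (rule inj_onI) (simp, metis al_inj sg_inj al_in)
lemma im_ph: "(sg \<circ> al) ` D \<subseteq> D" using al_in sg_in by auto

definition vert :: "'d \<Rightarrow> 'd set" where "vert x = {x, sg x, sg (sg x)}"

lemma vert_sub: "x \<in> D \<Longrightarrow> vert x \<subseteq> D" unfolding vert_def using sg_in by auto
lemma vert_self: "x \<in> vert x" unfolding vert_def by simp
lemma vert_sg: "x \<in> D \<Longrightarrow> vert (sg x) = vert x" unfolding vert_def using sg3 by auto
lemma in_vert: "x \<in> D \<Longrightarrow> y \<in> vert x \<Longrightarrow> vert y = vert x"
  unfolding vert_def using sg3 sg_in by auto
lemma vert_sym: "x \<in> D \<Longrightarrow> y \<in> D \<Longrightarrow> y \<in> vert x \<longleftrightarrow> x \<in> vert y"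
  using in_vert vert_self by metis
lemma card_vert: "x \<in> D \<Longrightarrow> card (vert x \<inter> Z) = of_bool (x \<in> Z) + of_bool (sg x \<in> Z) + of_bool (sg (sg x) \<in> Z)"
  unfolding vert_def by (rule card3) (use sg_ne sg2_ne sg2_ne' in metis)+

definition Inv :: "('d \<Rightarrow> 'd) \<Rightarrow> 'd set set" where
  "Inv f = {W. W \<subseteq> D \<and> (\<forall>x\<in>W. f x \<in> W)}"

lemma finite_Inv: "finite (Inv f)"
  unfolding Inv_def using fin by (simp add: finite_Collect_subsets)

lemma card_Inv_sg: "card (Inv sg) = 2 ^ card (map_orbits sg D)"
  unfolding Inv_def by (rule card_inv_sets[OF fin im_sg inj_sg])
lemma card_Inv_ph: "card (Inv (sg \<circ> al)) = 2 ^ card (map_orbits (sg \<circ> al) D)"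
  unfolding Inv_def by (rule card_inv_sets[OF fin im_ph inj_ph])

lemma al_orbit: "x \<in> D \<Longrightarrow> (al ^^ n) x \<in> {x, al x}"
  by (induction n) auto

lemma card_orbits_al: "2 * card (map_orbits al D) = card D"
proof -
  let ?R = "orbrel al D"
  have eq: "equiv D ?R" by (rule orbit_equiv[OF fin im_al inj_al])
  have cls: "?R `` {x} = {x, al x}" if "x \<in> D" for x
  proof
    show "?R `` {x} \<subseteq> {x, al x}" unfolding orbrel_def using al_orbit by auto
    have "(x, al x) \<in> ?R" unfolding orbrel_def using that by (auto intro: exI[of _ 1])
    moreover have "(x, x) \<in> ?R" unfolding orbrel_def using that by (auto intro: exI[of _ 0])
    ultimately show "{x, al x} \<subseteq> ?R `` {x}" by auto
  qed
  have "2 * card (D // ?R) = card (\<Union> (D // ?R))"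
  proof (rule card_partition)
    show "finite (D // ?R)" using fin by (rule finite_quotient) (use eq equiv_type in blast)
    show "finite (\<Union> (D // ?R))" using Union_quotient[OF eq] fin by simp
    show "card c = 2" if "c \<in> D // ?R" for c
    proof -
      from that obtain x where x: "x \<in> D" "c = ?R `` {x}" unfolding quotient_def by blast
      then show "card c = 2" using cls[OF x(1)] al_ne[OF x(1)] by simp
    qed
    show "c1 \<inter> c2 = {}" if "c1 \<in> D // ?R" "c2 \<in> D // ?R" "c1 \<noteq> c2" for c1 c2
      using that quotient_disj[OF eq] by blast
  qed
  then show ?thesis unfolding map_orbits_def orbrel_def[symmetric] Union_quotient[OF eq] .
qed

lemma card_Inv_al: "card (Inv al) = 2 ^ (card D div 2)"
proof -
  have "card (Inv al) = 2 ^ card (map_orbits al D)"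
    unfolding Inv_def by (rule card_inv_sets[OF fin im_al inj_al])
  then show ?thesis using card_orbits_al by simp
qed

end

context tmap begin

lemma inv_al_iff: assumes "Z \<in> Inv al" "x \<in> D" shows "(al x \<in> Z) = (x \<in> Z)"
proof
  assume "al x \<in> Z" then have "al (al x) \<in> Z" using assms(1) unfolding Inv_def by blast
  then show "x \<in> Z" using assms(2) by simp
next
  assume "x \<in> Z" then show "al x \<in> Z" using assms(1) unfolding Inv_def by blast
qed

lemma even_inv_al: "W \<subseteq> D \<Longrightarrow> \<forall>x\<in>W. al x \<in> W \<Longrightarrow> even (card W)"
proof (induction "card W" arbitrary: W rule: less_induct)
  case less
  show ?case
  proof (cases "W = {}")
    case True then show ?thesis by simp
  next
    case False
    then obtain x where x: "x \<in> W" by blast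
    have xD: "x \<in> D" using x less.prems by blast
    let ?W = "W - {x, al x}"
    have finW: "finite W" using less.prems(1) fin finite_subset by blast
    have c: "card W = card ?W + 2"
    proof -
      have "card ?W = card W - card {x, al x}"
        by (rule card_Diff_subset) (use x less.prems xD in auto)
      moreover have "card {x, al x} = 2" using al_ne[OF xD] by simp
      moreover have "card {x, al x} \<le> card W" by (rule card_mono[OF finW]) (use x less.prems in auto)
      ultimately show ?thesis by simp
    qed
    have "even (card ?W)"
    proof (rule less.hyps)
      show "card ?W < card W" using c by simp
      show "?W \<subseteq> D" using less.prems by blast
      show "\<forall>y\<in>?W. al y \<in> ?W"
      proof
        fix y assume y: "y \<in> ?W"
        then have yD: "y \<in> D" using less.prems by blast
        have "al y \<noteq> x" using y al_al[OF yD] by auto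
        moreover have "al y \<noteq> al x" using y al_inj[OF yD xD] by auto
        ultimately show "al y \<in> ?W" using y less.prems by auto
      qed
    qed
    then show ?thesis using c by simp
  qed
qed

definition bd :: "'d set \<Rightarrow> 'd set" where
  "bd Z = {x \<in> D. odd (card (vert x \<inter> Z))}"

definition Cyc :: "'d set set" where
  "Cyc = {Z \<in> Inv al. bd Z = {}}"

definition zz :: "'d set \<Rightarrow> 'd set" where
  "zz X = {x \<in> D. (x \<in> X) \<noteq> (al x \<in> X)}"

lemma ph_pre:
  assumes X: "X \<in> Inv (sg \<circ> al)" and z: "z \<in> D" and p: "sg (al z) \<in> X"
  shows "z \<in> X"
proof -
  have XD: "X \<subseteq> D" and cl: "\<forall>x\<in>X. sg (al x) \<in> X" using X unfolding Inv_def by auto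
  have finX: "finite X" using XD fin finite_subset by blast
  have "(sg \<circ> al) ` X = X"
    by (rule endo_inj_surj[OF finX]) (use cl inj_ph XD inj_on_subset in auto)
  then obtain x' where "x' \<in> X" "sg (al z) = sg (al x')" using p by force
  then show ?thesis using al_inj sg_inj al_in z XD by blast
qed

lemma al_iff_sg: "X \<in> Inv (sg \<circ> al) \<Longrightarrow> y \<in> D \<Longrightarrow> (al y \<in> X) = (sg y \<in> X)"
proof
  assume "X \<in> Inv (sg \<circ> al)" "y \<in> D" "al y \<in> X"
  then have "(sg \<circ> al) (al y) \<in> X" unfolding Inv_def by blast
  then show "sg y \<in> X" using \<open>y \<in> D\<close> by simp
next
  assume X: "X \<in> Inv (sg \<circ> al)" and y: "y \<in> D" and "sg y \<in> X"
  then have "sg (al (al y)) \<in> X" by simp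
  then show "al y \<in> X" using ph_pre[OF X al_in[OF y]] by blast
qed

lemma zz_Inv: "zz X \<in> Inv al"
  unfolding zz_def Inv_def using al_in by auto

lemma zz_Cyc: assumes X: "X \<in> Inv (sg \<circ> al)" shows "zz X \<in> Cyc"
proof -
  have "bd (zz X) = {}"
  proof -
    have "even (card (vert x \<inter> zz X))" if x: "x \<in> D" for x
    proof -
      have m: "y \<in> zz X \<longleftrightarrow> (y \<in> X) \<noteq> (sg y \<in> X)" if "y \<in> D" for y
        using al_iff_sg[OF X that] that unfolding zz_def by auto
      show ?thesis unfolding card_vert[OF x] m[OF x] m[OF sg_in[OF x]] m[OF sg_sg_in[OF x]] sg3[OF x]
        by (cases "x \<in> X"; cases "sg x \<in> X"; cases "sg (sg x) \<in> X") auto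
    qed
    then show ?thesis unfolding bd_def by auto
  qed
  then show ?thesis unfolding Cyc_def using zz_Inv by simp
qed

lemma bd_symd: "bd (symd Z1 Z2) = symd (bd Z1) (bd Z2)"
proof -
  have h: "odd (card (vert x \<inter> symd Z1 Z2)) \<longleftrightarrow> odd (card (vert x \<inter> Z1)) \<noteq> odd (card (vert x \<inter> Z2))" for x
  proof -
    have "vert x \<inter> symd Z1 Z2 = symd (vert x \<inter> Z1) (vert x \<inter> Z2)" by auto
    then show ?thesis using odd_card_symd[of "vert x \<inter> Z1" "vert x \<inter> Z2"] unfolding vert_def by simp
  qed
  show ?thesis
  proof (rule set_eqI)
    fix x show "x \<in> bd (symd Z1 Z2) \<longleftrightarrow> x \<in> symd (bd Z1) (bd Z2)"
      unfolding bd_def using h[of x]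
      by (cases "x \<in> D"; cases "odd (card (vert x \<inter> Z1))") simp_all
  qed
qed

lemma symd_Inv: assumes "Z1 \<in> Inv al" "Z2 \<in> Inv al" shows "symd Z1 Z2 \<in> Inv al"
proof -
  have s: "Z1 \<subseteq> D" "Z2 \<subseteq> D" using assms unfolding Inv_def by auto
  have "al x \<in> symd Z1 Z2" if x: "x \<in> symd Z1 Z2" for x
  proof -
    have xD: "x \<in> D" using x s by auto
    show ?thesis using inv_al_iff[OF assms(1) xD] inv_al_iff[OF assms(2) xD] x by simp
  qed
  moreover have "symd Z1 Z2 \<subseteq> D" using s by auto
  ultimately show ?thesis unfolding Inv_def by blast
qed

lemma bd_empty[simp]: "bd {} = {}" unfolding bd_def by simp

lemma bd_edge: assumes y: "y \<in> D" shows "bd {y, al y} = symd (vert y) (vert (al y))"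
proof (rule set_eqI)
  fix x
  have ay: "al y \<in> D" using al_in[OF y] .
  show "x \<in> bd {y, al y} \<longleftrightarrow> x \<in> symd (vert y) (vert (al y))"
  proof (cases "x \<in> D")
    case False
    have "x \<notin> vert y" "x \<notin> vert (al y)" using False vert_sub[OF y] vert_sub[OF ay] by blast+
    then show ?thesis by (simp add: bd_def False)
  next
    case True
    have c: "card (vert x \<inter> {y, al y}) = of_bool (y \<in> vert x) + of_bool (al y \<in> vert x)"
      using al_ne[OF y] by (cases "y \<in> vert x"; cases "al y \<in> vert x") (auto simp: Int_insert_right)
    have "x \<in> bd {y, al y} \<longleftrightarrow> odd (card (vert x \<inter> {y, al y}))" by (simp add: bd_def True)
    then show ?thesis unfolding c in_symd vert_sym[OF True y, symmetric] vert_sym[OF True ay, symmetric]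
      by (cases "y \<in> vert x"; cases "al y \<in> vert x") simp_all
  qed
qed

end

locale pmap = tmap +
  assumes conn: "connected_map D al sg" and pl: "planar_map D al sg"
begin

lemma D_ne: "D \<noteq> {}"
proof
  assume e: "D = {}"
  then have "map_orbits f D = {}" for f unfolding map_orbits_def quotient_def by simp
  then show False using pl e unfolding planar_map_def by simp
qed

lemma conn_closed:
  assumes T: "T \<subseteq> D" "\<forall>x\<in>T. al x \<in> T" "\<forall>x\<in>T. sg x \<in> T" and x0: "x0 \<in> T"
  shows "T = D"
proof
  show "D \<subseteq> T"
  proof
    fix y assume y: "y \<in> D"
    have "(x0, y) \<in> ({(a, al a) | a. a \<in> D} \<union> {(a, sg a) | a. a \<in> D})\<^sup>*"
      using conn[unfolded connected_map_def, rule_format, OF _ y] x0 T(1) by blast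
    then show "y \<in> T"
    proof (induction rule: rtrancl_induct)
      case base then show ?case using x0 .
    next
      case (step a b) then show ?case using T by auto
    qed
  qed
qed (use T in auto)

lemma path:
  assumes x0: "x0 \<in> D" and y: "y \<in> D"
  shows "\<exists>Z\<in>Inv al. bd Z = symd (vert x0) (vert y)"
proof -
  have "(x0, y) \<in> ({(a, al a) | a. a \<in> D} \<union> {(a, sg a) | a. a \<in> D})\<^sup>*"
    using conn[unfolded connected_map_def, rule_format, OF x0 y] .
  then show ?thesis
  proof (induction rule: rtrancl_induct)
    case base
    have "{} \<in> Inv al" unfolding Inv_def by simp
    moreover have "bd {} = symd (vert x0) (vert x0)" by auto
    ultimately show ?case by blast
  next
    case (step a b)
    then obtain Z where Z: "Z \<in> Inv al" "bd Z = symd (vert x0) (vert a)" by blast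
    from step(2) consider "a \<in> D" "b = al a" | "a \<in> D" "b = sg a" by blast
    then show ?case
    proof cases
      case 1
      have e: "{a, al a} \<in> Inv al" unfolding Inv_def using 1 al_in by auto
      have "bd (symd Z {a, al a}) = symd (vert x0) (vert b)"
        unfolding bd_symd Z(2) bd_edge[OF 1(1)] 1(2) by auto
      then show ?thesis by (rule bexI[OF _ symd_Inv[OF Z(1) e]])
    next
      case 2
      have vb: "vert b = vert a" using 2 vert_sg by simp
      show ?thesis by (rule bexI[OF _ Z(1)]) (use Z(2) vb in simp)
    qed
  qed
qed

end

context pmap begin

lemma img_claim:
  assumes x0: "x0 \<in> D"
  shows "W \<in> Inv sg \<Longrightarrow> W \<in> bd ` Inv al \<or> symd W (vert x0) \<in> bd ` Inv al"
proof (induction "card W" arbitrary: W rule: less_induct)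
  case less
  have WD: "W \<subseteq> D" and Wc: "\<forall>x\<in>W. sg x \<in> W" using less.prems unfolding Inv_def by auto
  have finW: "finite W" using WD fin finite_subset by blast
  have e0: "{} \<in> Inv al" unfolding Inv_def by simp
  show ?case
  proof (cases "W = {}")
    case True
    then show ?thesis using e0 bd_empty by (metis image_eqI)
  next
    case False
    then obtain x where x: "x \<in> W" by blast
    have xD: "x \<in> D" using x WD by blast
    have vx: "vert x \<subseteq> W" unfolding vert_def using x Wc by auto
    let ?W = "W - vert x"
    have W'inv: "?W \<in> Inv sg"
    proof -
      have "sg y \<in> ?W" if y: "y \<in> ?W" for y
      proof -
        have yD: "y \<in> D" using y WD by blast
        have "sg y \<notin> vert x"
        proof
          assume "sg y \<in> vert x"
          then have "vert (sg y) = vert x" using in_vert[OF xD] by blast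
          then have "y \<in> vert x" using vert_sg[OF yD] vert_self[of y] by simp
          then show False using y by blast
        qed
        then show ?thesis using y Wc by blast
      qed
      then show ?thesis unfolding Inv_def using WD by blast
    qed
    have lt: "card ?W < card W"
      by (rule psubset_card_mono[OF finW]) (use x vert_self[of x] in blast)
    have Weq: "W = symd ?W (vert x)" using vx by auto
    obtain Zp where Zp: "Zp \<in> Inv al" "bd Zp = symd (vert x0) (vert x)" using path[OF x0 xD] by blast
    from less.hyps[OF lt W'inv] show ?thesis
    proof
      assume "?W \<in> bd ` Inv al"
      then obtain Z' where Z': "Z' \<in> Inv al" "bd Z' = ?W" by auto
      have "bd (symd Z' Zp) = symd W (vert x0)"
        unfolding bd_symd Z'(2) Zp(2) by (subst Weq) auto
      then have "symd W (vert x0) \<in> bd ` Inv al" using symd_Inv[OF Z'(1) Zp(1)] by (metis image_eqI)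
      then show ?thesis by blast
    next
      assume "symd ?W (vert x0) \<in> bd ` Inv al"
      then obtain Z' where Z': "Z' \<in> Inv al" "bd Z' = symd ?W (vert x0)" by auto
      have "bd (symd Z' Zp) = W"
        unfolding bd_symd Z'(2) Zp(2) by (subst (2) Weq) auto
      then have "W \<in> bd ` Inv al" using symd_Inv[OF Z'(1) Zp(1)] by (metis image_eqI)
      then show ?thesis by blast
    qed
  qed
qed

lemma card_Inv_sg_le: "card (Inv sg) \<le> 2 * card (bd ` Inv al)"
proof -
  obtain x0 where x0: "x0 \<in> D" using D_ne by blast
  let ?I = "bd ` Inv al"
  have finI: "finite ?I" using finite_Inv by simp
  have "Inv sg \<subseteq> ?I \<union> (\<lambda>W. symd W (vert x0)) ` ?I"
  proof
    fix W assume W: "W \<in> Inv sg"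
    have "symd (symd W (vert x0)) (vert x0) = W" by auto
    then show "W \<in> ?I \<union> (\<lambda>W. symd W (vert x0)) ` ?I"
      using img_claim[OF x0 W] by (metis UnI1 UnI2 image_eqI)
  qed
  then have "card (Inv sg) \<le> card (?I \<union> (\<lambda>W. symd W (vert x0)) ` ?I)"
    by (rule card_mono[rotated]) (use finI in simp)
  also have "\<dots> \<le> card ?I + card ((\<lambda>W. symd W (vert x0)) ` ?I)" by (rule card_Un_le)
  also have "\<dots> \<le> card ?I + card ?I" using card_image_le[OF finI] by simp
  finally show ?thesis by simp
qed

lemma card_Inv_al_eq: "card (Inv al) = card Cyc * card (bd ` Inv al)"
proof (rule card_fibers[OF finite_Inv])
  fix y assume "y \<in> bd ` Inv al"
  then obtain Z0 where Z0: "Z0 \<in> Inv al" "y = bd Z0" by auto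
  have "bij_betw (\<lambda>C. symd C Z0) Cyc {Z \<in> Inv al. bd Z = y}"
  proof (rule bij_betw_byWitness[where f' = "\<lambda>Z. symd Z Z0"])
    show "\<forall>a\<in>Cyc. symd (symd a Z0) Z0 = a" by auto
    show "\<forall>a'\<in>{Z \<in> Inv al. bd Z = y}. symd (symd a' Z0) Z0 = a'" by auto
    show "(\<lambda>C. symd C Z0) ` Cyc \<subseteq> {Z \<in> Inv al. bd Z = y}"
    proof
      fix Z assume "Z \<in> (\<lambda>C. symd C Z0) ` Cyc"
      then obtain C where C: "C \<in> Cyc" "Z = symd C Z0" by auto
      have "bd Z = y" unfolding C(2) bd_symd using C(1) Z0(2) unfolding Cyc_def by auto
      then show "Z \<in> {Z \<in> Inv al. bd Z = y}" using symd_Inv[OF _ Z0(1), of C] C unfolding Cyc_def by auto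
    qed
    show "(\<lambda>Z. symd Z Z0) ` {Z \<in> Inv al. bd Z = y} \<subseteq> Cyc"
    proof
      fix C assume "C \<in> (\<lambda>Z. symd Z Z0) ` {Z \<in> Inv al. bd Z = y}"
      then obtain Z where Z: "Z \<in> Inv al" "bd Z = y" "C = symd Z Z0" by auto
      have "bd C = {}" unfolding Z(3) bd_symd using Z(2) Z0(2) by auto
      then show "C \<in> Cyc" unfolding Cyc_def using symd_Inv[OF Z(1) Z0(1)] Z(3) by auto
    qed
  qed
  then show "card {Z \<in> Inv al. bd Z = y} = card Cyc" by (simp add: bij_betw_same_card)
qed

lemma zz_fiber:
  assumes X: "X \<in> Inv (sg \<circ> al)"
  shows "{X' \<in> Inv (sg \<circ> al). zz X' = zz X} = {X, D - X}"
proof -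
  have XD: "X \<subseteq> D" using X unfolding Inv_def by auto
  have cX: "D - X \<in> Inv (sg \<circ> al)"
  proof -
    have "sg (al z) \<in> D - X" if "z \<in> D - X" for z
      using that ph_pre[OF X, of z] al_in sg_in by auto
    then show ?thesis unfolding Inv_def by auto
  qed
  have zc: "zz (D - X) = zz X" unfolding zz_def using al_in by auto
  have "X' \<in> {X, D - X}" if X': "X' \<in> Inv (sg \<circ> al)" "zz X' = zz X" for X'
  proof -
    have X'D: "X' \<subseteq> D" using X' unfolding Inv_def by auto
    let ?T = "symd X X'"
    have TD: "?T \<subseteq> D" using XD X'D by auto
    have ta: "al x \<in> ?T" if x: "x \<in> ?T" for x
    proof -
      have xD: "x \<in> D" using x TD by blast
      have "(x \<in> zz X) = (x \<in> zz X')" using X'(2) by simp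
      then have "((x \<in> X) \<noteq> (al x \<in> X)) = ((x \<in> X') \<noteq> (al x \<in> X'))" unfolding zz_def using xD by simp
      then show ?thesis using x al_in[OF xD] by auto
    qed
    have ts: "sg x \<in> ?T" if x: "x \<in> ?T" for x
    proof -
      have xD: "x \<in> D" using x TD by blast
      have "al x \<in> ?T" using ta[OF x] .
      then show ?thesis using al_iff_sg[OF X xD] al_iff_sg[OF X'(1) xD] by simp
    qed
    show ?thesis
    proof (cases "?T = {}")
      case True
      then have "X' = X" by auto
      then show ?thesis by simp
    next
      case False
      then obtain t where "t \<in> ?T" by blast
      then have "?T = D" using conn_closed[OF TD _ _] ta ts by blast
      then have "X' = D - X" using XD X'D by auto
      then show ?thesis by simp
    qed
  qed
  then show ?thesis using X cX zc by auto
qed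

lemma card_Inv_ph_eq: "card (Inv (sg \<circ> al)) = 2 * card (zz ` Inv (sg \<circ> al))"
proof (rule card_fibers[OF finite_Inv])
  fix y assume "y \<in> zz ` Inv (sg \<circ> al)"
  then obtain X where X: "X \<in> Inv (sg \<circ> al)" "y = zz X" by auto
  have XD: "X \<subseteq> D" using X unfolding Inv_def by auto
  have "X \<noteq> D - X" using D_ne XD by auto
  then show "card {X' \<in> Inv (sg \<circ> al). zz X' = y} = 2" unfolding X(2) zz_fiber[OF X(1)] by simp
qed

lemma Cyc_eq: "Cyc = zz ` Inv (sg \<circ> al)"
proof -
  let ?V = "card (map_orbits sg D)" and ?F = "card (map_orbits (sg \<circ> al) D)" and ?E = "card D div 2"
  have e: "?F + ?V = ?E + 2" using pl unfolding planar_map_def by simp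
  have sub: "zz ` Inv (sg \<circ> al) \<subseteq> Cyc" using zz_Cyc by auto
  have finC: "finite Cyc" using finite_Inv unfolding Cyc_def by simp
  have h1: "2 ^ ?E = card Cyc * card (bd ` Inv al)" using card_Inv_al_eq card_Inv_al by simp
  have h2: "2 ^ ?V \<le> 2 * card (bd ` Inv al)" using card_Inv_sg_le card_Inv_sg by simp
  have h3: "2 ^ ?F = 2 * card (zz ` Inv (sg \<circ> al))" using card_Inv_ph_eq card_Inv_ph by simp
  have h4: "(2::nat) ^ ?F * 2 ^ ?V = 4 * 2 ^ ?E"
    by (simp add: power_add[symmetric] e power_add)
  have "card Cyc * 2 ^ ?V \<le> card Cyc * (2 * card (bd ` Inv al))" using h2 by simp
  also have "\<dots> = 2 * 2 ^ ?E" using h1 by simp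
  also have "\<dots> = card (zz ` Inv (sg \<circ> al)) * 2 ^ ?V" using h3 h4 by (simp add: mult.commute)
  finally have "card Cyc \<le> card (zz ` Inv (sg \<circ> al))" by simp
  then show ?thesis using card_seteq[OF finC sub] by simp
qed

end

lemma card_filter_sum: "finite X \<Longrightarrow> card {x\<in>X. Q x} = (\<Sum>x\<in>X. of_bool (Q x))"
proof -
  assume f: "finite X"
  have "card {x\<in>X. Q x} = (\<Sum>x\<in>{x\<in>X. Q x}. 1::nat)" by simp
  also have "\<dots> = (\<Sum>x\<in>X. if Q x then 1 else 0)" by (rule sum.inter_filter[OF f])
  finally show ?thesis by (simp add: of_bool_def)
qed

lemma parity_aux:
  fixes zp zy f e a b c :: nat
  assumes "zp + 2 * f = a + b" "zy + 2 * e = c + c" "even e" "even (a + b + c)"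
  shows "even (zp + zy div 2)"
  using assms by presburger

context pmap begin

lemma ph_img: assumes X: "X \<in> Inv (sg \<circ> al)" shows "(sg \<circ> al) ` X = X"
proof -
  have XD: "X \<subseteq> D" and cl: "\<forall>x\<in>X. sg (al x) \<in> X" using X unfolding Inv_def by auto
  have finX: "finite X" using XD fin finite_subset by blast
  show ?thesis
    by (rule endo_inj_surj[OF finX]) (use cl inj_ph XD inj_on_subset in auto)
qed

lemma key:
  assumes Yal: "\<forall>x\<in>D. (al x \<in> Y) = (x \<in> Y)" and YD: "Y \<subseteq> D"
    and hP: "\<forall>y\<in>D. ((y \<in> P) = (sg y \<in> P)) = (y \<notin> Y)"
    and Z: "Z \<in> Cyc"
  shows "even (card (Z \<inter> P) + card (Z \<inter> Y) div 2)"
proof -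
  obtain X where X: "X \<in> Inv (sg \<circ> al)" and ZX: "Z = zz X" using Z Cyc_eq by auto
  have XD: "X \<subseteq> D" using X unfolding Inv_def by auto
  have finX: "finite X" using XD fin finite_subset by blast
  let ?AX = "al ` X"
  have finAX: "finite ?AX" using finX by simp
  have injX: "inj_on al X" using inj_al XD inj_on_subset by blast
  have zzeq: "zz X = symd X ?AX"
  proof (rule set_eqI)
    fix x show "x \<in> zz X \<longleftrightarrow> x \<in> symd X ?AX"
    proof (cases "x \<in> D")
      case True
      have "x \<in> ?AX \<longleftrightarrow> al x \<in> X"
      proof
        assume "x \<in> ?AX" then obtain x' where "x' \<in> X" "x = al x'" by auto
        then show "al x \<in> X" using XD by auto
      next
        assume "al x \<in> X" then show "x \<in> ?AX" using True by (metis al_al image_eqI)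
      qed
      then show ?thesis unfolding zz_def using True by simp
    next
      case False
      then have "x \<notin> X" "x \<notin> ?AX" using XD al_in by auto
      then show ?thesis unfolding zz_def using False by simp
    qed
  qed
  have cP: "card (Z \<inter> P) + 2 * card (X \<inter> ?AX \<inter> P) = card (X \<inter> P) + card (?AX \<inter> P)"
  proof -
    have "Z \<inter> P = symd (X \<inter> P) (?AX \<inter> P)" unfolding ZX zzeq by auto
    moreover have "(X \<inter> P) \<inter> (?AX \<inter> P) = X \<inter> ?AX \<inter> P" by auto
    ultimately show ?thesis using card_symd[of "X \<inter> P" "?AX \<inter> P"] finX finAX by simp
  qed
  have cY: "card (Z \<inter> Y) + 2 * card (X \<inter> ?AX \<inter> Y) = card (X \<inter> Y) + card (?AX \<inter> Y)"
  proof -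
    have "Z \<inter> Y = symd (X \<inter> Y) (?AX \<inter> Y)" unfolding ZX zzeq by auto
    moreover have "(X \<inter> Y) \<inter> (?AX \<inter> Y) = X \<inter> ?AX \<inter> Y" by auto
    ultimately show ?thesis using card_symd[of "X \<inter> Y" "?AX \<inter> Y"] finX finAX by simp
  qed
  have AY: "card (?AX \<inter> Y) = card (X \<inter> Y)"
  proof -
    have "?AX \<inter> Y = al ` (X \<inter> Y)" using Yal XD by auto
    then show ?thesis using card_image[OF inj_on_subset[OF injX]] by simp
  qed
  have AP: "card (?AX \<inter> P) = card {x\<in>X. al x \<in> P}"
  proof -
    have "?AX \<inter> P = al ` {x\<in>X. al x \<in> P}" by auto
    then show ?thesis using card_image[OF inj_on_subset[OF injX]] by simp
  qed
  have ev_e: "even (card (X \<inter> ?AX \<inter> Y))"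
  proof (rule even_inv_al)
    show "X \<inter> ?AX \<inter> Y \<subseteq> D" using XD by auto
    show "\<forall>x\<in>X \<inter> ?AX \<inter> Y. al x \<in> X \<inter> ?AX \<inter> Y"
    proof
      fix x assume x: "x \<in> X \<inter> ?AX \<inter> Y"
      then have xD: "x \<in> D" using XD by auto
      obtain x' where x': "x' \<in> X" "x = al x'" using x by auto
      have "al x \<in> X" using x' XD by auto
      moreover have "al x \<in> ?AX" using x by auto
      moreover have "al x \<in> Y" using x Yal xD by auto
      ultimately show "al x \<in> X \<inter> ?AX \<inter> Y" by blast
    qed
  qed
  have phP: "card {x\<in>X. sg (al x) \<in> P} = card (X \<inter> P)"
  proof -
    have injph: "inj_on (sg \<circ> al) X" using inj_ph XD inj_on_subset by blast
    have "(sg \<circ> al) ` {x\<in>X. sg (al x) \<in> P} = X \<inter> P"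
      using ph_img[OF X] by auto
    moreover have "inj_on (sg \<circ> al) {x\<in>X. sg (al x) \<in> P}" by (rule inj_on_subset[OF injph]) auto
    ultimately show ?thesis using card_image by metis
  qed
  have pw: "even (of_bool (al x \<in> P) + of_bool (x \<in> Y) + of_bool (sg (al x) \<in> P) :: nat)" if x: "x \<in> X" for x
  proof -
    have xD: "x \<in> D" using x XD by auto
    have "((al x \<in> P) = (sg (al x) \<in> P)) = (al x \<notin> Y)" using hP al_in[OF xD] by blast
    moreover have "(al x \<in> Y) = (x \<in> Y)" using Yal xD by blast
    ultimately show ?thesis
      by (cases "al x \<in> P"; cases "x \<in> Y"; cases "sg (al x) \<in> P") simp_all
  qed
  have "even (\<Sum>x\<in>X. (of_bool (al x \<in> P) + of_bool (x \<in> Y) + of_bool (sg (al x) \<in> P) :: nat))"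
    by (rule dvd_sum) (use pw in blast)
  then have ev3: "even (card {x\<in>X. al x \<in> P} + card {x\<in>X. x \<in> Y} + card {x\<in>X. sg (al x) \<in> P})"
    unfolding card_filter_sum[OF finX] sum.distrib by simp
  have "{x\<in>X. x \<in> Y} = X \<inter> Y" by auto
  then have ev4: "even (card (X \<inter> P) + card (?AX \<inter> P) + card (X \<inter> Y))"
    using ev3 AP phP by (simp add: add.commute add.left_commute)
  show ?thesis using parity_aux[OF cP cY[unfolded AY] ev_e ev4] .
qed

end

context tmap begin

definition PM :: "'d set set" where "PM = {M. perfect_matching D al sg M}"
definition St :: "'d set \<Rightarrow> 'd set set" where "St M = {S. S \<subseteq> M \<and> (\<forall>x\<in>S. al x \<in> S)}"
definition rp :: "'d set \<Rightarrow> 'd set \<Rightarrow> 'd \<Rightarrow> 'd" where "rp M S = res_partner al sg M S"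
definition Lset :: "'d set \<Rightarrow> 'd set \<Rightarrow> 'd set set" where
  "Lset M S = {L. L \<subseteq> D - M \<and> (\<forall>x\<in>L. al x \<in> L \<and> rp M S x \<in> L)}"
definition Good :: "'d set \<Rightarrow> 'd set set" where
  "Good M = {L. L \<subseteq> D - M \<and> (\<forall>x\<in>L. al x \<in> L) \<and> (\<forall>d\<in>M. (sg d \<in> L) \<noteq> (sg (sg d) \<in> L))}"
definition SL :: "'d set \<Rightarrow> 'd set \<Rightarrow> 'd set" where
  "SL M L = {d\<in>M. (sg d \<in> L) = (sg (al d) \<in> L)}"

lemma pm_sub: "M \<in> PM \<Longrightarrow> M \<subseteq> D" unfolding PM_def perfect_matching_def by blast
lemma pm_al: "M \<in> PM \<Longrightarrow> x \<in> M \<Longrightarrow> al x \<in> M" unfolding PM_def perfect_matching_def by blast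
lemma pm_one: assumes "M \<in> PM" "x \<in> D"
  shows "of_bool (x \<in> M) + of_bool (sg x \<in> M) + of_bool (sg (sg x) \<in> M) = (1::nat)"
proof -
  have "card ({x, sg x, sg (sg x)} \<inter> M) = 1" using assms unfolding PM_def perfect_matching_def by blast
  then show ?thesis using card3[of x "sg x" "sg (sg x)" M] sg_ne[OF assms(2)] sg2_ne[OF assms(2)] sg2_ne'[OF assms(2)]
    by simp
qed
lemma pm_M: assumes "M \<in> PM" "x \<in> M" shows "sg x \<notin> M" "sg (sg x) \<notin> M"
  using pm_one[OF assms(1) pm_sub[OF assms(1), THEN subsetD, OF assms(2)]] assms(2) by auto
lemma pm_nM: assumes "M \<in> PM" "x \<in> D" "x \<notin> M" shows "(sg x \<in> M) \<noteq> (sg (sg x) \<in> M)"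
  using pm_one[OF assms(1,2)] assms(3) by (cases "sg x \<in> M"; cases "sg (sg x) \<in> M") auto
lemma pm_al_iff: assumes "M \<in> PM" "x \<in> D" shows "(al x \<in> M) = (x \<in> M)"
proof
  assume "al x \<in> M" then have "al (al x) \<in> M" using pm_al[OF assms(1)] by blast
  then show "x \<in> M" using assms(2) by simp
qed (rule pm_al[OF assms(1)])

lemma dm_cases:
  assumes M: "M \<in> PM" and x: "x \<in> D" "x \<notin> M"
  obtains d where "d \<in> M" "x = sg d" | d where "d \<in> M" "x = sg (sg d)"
proof (cases "sg (sg x) \<in> M")
  case True
  then show ?thesis using that(1)[of "sg (sg x)"] sg3[OF x(1)] by simp
next
  case False
  then have "sg x \<in> M" using pm_nM[OF M x] by simp
  then show ?thesis using that(2)[of "sg x"] sg3[OF x(1)] by simp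
qed

lemma rp1: assumes M: "M \<in> PM" and d: "d \<in> M"
  shows "rp M S (sg d) = (if d \<in> S then sg (al d) else sg (sg (al d)))"
proof -
  have dD: "d \<in> D" using d pm_sub[OF M] by blast
  show ?thesis unfolding rp_def res_partner_def using sg3[OF dD] d by (simp add: Let_def)
qed

lemma rp2: assumes M: "M \<in> PM" and d: "d \<in> M"
  shows "rp M S (sg (sg d)) = (if d \<in> S then sg (sg (al d)) else sg (al d))"
proof -
  have dD: "d \<in> D" using d pm_sub[OF M] by blast
  have "sg (sg (sg (sg d))) = sg d" using sg3[OF dD] by simp
  moreover have "sg d \<notin> M" using pm_M[OF M d] by simp
  ultimately show ?thesis unfolding rp_def res_partner_def using sg3[OF dD] d by (simp add: Let_def)
qed

lemma dm_facts: assumes M: "M \<in> PM" and d: "d \<in> M"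
  shows "d \<in> D" "al d \<in> M" "al d \<in> D" "sg d \<in> D - M" "sg (sg d) \<in> D - M"
    "sg (al d) \<in> D - M" "sg (sg (al d)) \<in> D - M"
proof -
  show dD: "d \<in> D" using d pm_sub[OF M] by blast
  show ad: "al d \<in> M" using pm_al[OF M d] .
  show adD: "al d \<in> D" using al_in[OF dD] .
  show "sg d \<in> D - M" "sg (sg d) \<in> D - M" using pm_M[OF M d] sg_in[OF dD] sg_sg_in[OF dD] by auto
  show "sg (al d) \<in> D - M" "sg (sg (al d)) \<in> D - M" using pm_M[OF M ad] sg_in[OF adD] sg_sg_in[OF adD] by auto
qed

lemma rp_in: assumes M: "M \<in> PM" and x: "x \<in> D" "x \<notin> M" shows "rp M S x \<in> D - M"
  using dm_cases[OF M x]
proof cases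
  case (1 d) then show ?thesis using rp1[OF M 1(1)] dm_facts[OF M 1(1)] by simp
next
  case (2 d) then show ?thesis using rp2[OF M 2(1)] dm_facts[OF M 2(1)] by simp
qed

lemma rp_rp: assumes M: "M \<in> PM" and S: "S \<in> St M" and x: "x \<in> D" "x \<notin> M" shows "rp M S (rp M S x) = x"
proof -
  have Sal: "(al d \<in> S) = (d \<in> S)" if dM: "d \<in> M" for d
  proof
    assume "al d \<in> S" then have "al (al d) \<in> S" using S unfolding St_def by blast
    then show "d \<in> S" using dm_facts(1)[OF M dM] by simp
  next
    assume "d \<in> S" then show "al d \<in> S" using S unfolding St_def by blast
  qed
  show ?thesis using dm_cases[OF M x]
  proof cases
    case (1 d)
    have ad: "al d \<in> M" and dD: "d \<in> D" using dm_facts[OF M 1(1)] by auto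
    show ?thesis using rp1[OF M 1(1), of S] rp1[OF M ad, of S] rp2[OF M ad, of S] Sal[OF 1(1)] 1(2) dD
      by (cases "d \<in> S") simp_all
  next
    case (2 d)
    have ad: "al d \<in> M" and dD: "d \<in> D" using dm_facts[OF M 2(1)] by auto
    show ?thesis using rp2[OF M 2(1), of S] rp1[OF M ad, of S] rp2[OF M ad, of S] Sal[OF 2(1)] 2(2) dD
      by (cases "d \<in> S") simp_all
  qed
qed

end

context tmap begin

lemma nc_card:
  assumes M: "M \<in> PM" and S: "S \<in> St M"
  shows "card (Lset M S) = 2 ^ num_curves D al sg M S"
proof -
  let ?A = "D - M"
  define r where "r = {(x, al x) | x. x \<in> D - M} \<union> {(x, res_partner al sg M S x) | x. x \<in> D - M}"
  have rpe: "res_partner al sg M S = rp M S" unfolding rp_def ..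
  have alA: "al x \<in> ?A" if "x \<in> ?A" for x using that al_in pm_al_iff[OF M] by auto
  have rA: "r \<subseteq> ?A \<times> ?A" unfolding r_def rpe using alA rp_in[OF M] by auto
  have rsym: "sym r"
  proof (rule symI)
    fix a b assume "(a, b) \<in> r"
    then consider "a \<in> ?A" "b = al a" | "a \<in> ?A" "b = rp M S a" unfolding r_def rpe by blast
    then show "(b, a) \<in> r"
    proof cases
      case 1
      then have "(b, al b) \<in> r" unfolding r_def using alA by blast
      then show ?thesis using 1 by simp
    next
      case 2
      then have "(b, rp M S b) \<in> r" unfolding r_def rpe using rp_in[OF M] by blast
      then show ?thesis using 2 rp_rp[OF M S] by simp
    qed
  qed
  have stay: "y \<in> ?A" if xy: "(x, y) \<in> r\<^sup>*" and xA: "x \<in> ?A" for x y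
    using xy
  proof (induction rule: rtrancl_induct)
    case base then show ?case using xA .
  next
    case (step a b) then show ?case using rA by blast
  qed
  define R where "R = r\<^sup>* \<inter> (?A \<times> ?A)"
  have eq: "equiv ?A R"
  proof (rule equivI)
    show "R \<subseteq> ?A \<times> ?A" unfolding R_def by blast
    show "refl_on ?A R" unfolding refl_on_def R_def by blast
    show "sym R" unfolding R_def using sym_rtrancl[OF rsym] unfolding sym_def by blast
    show "trans R"
    proof (rule transI)
      fix x y z assume "(x, y) \<in> R" "(y, z) \<in> R"
      then show "(x, z) \<in> R" unfolding R_def by (blast intro: rtrancl_trans)
    qed
  qed
  have cls: "R `` {x} = r\<^sup>* `` {x}" if "x \<in> ?A" for x
    unfolding R_def using stay that by blast
  have q: "?A // R = ?A // r\<^sup>*"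
    unfolding quotient_def by (rule SUP_cong[OF refl]) (simp add: cls)
  have cl: "{W. W \<subseteq> ?A \<and> (\<forall>x\<in>W. \<forall>y. (x,y)\<in>R \<longrightarrow> y\<in>W)} = Lset M S"
  proof (intro set_eqI iffI)
    fix W assume "W \<in> {W. W \<subseteq> ?A \<and> (\<forall>x\<in>W. \<forall>y. (x,y)\<in>R \<longrightarrow> y\<in>W)}"
    then have W: "W \<subseteq> ?A" "\<forall>x\<in>W. \<forall>y. (x,y)\<in>R \<longrightarrow> y\<in>W" by auto
    have "al x \<in> W \<and> rp M S x \<in> W" if x: "x \<in> W" for x
    proof -
      have xA: "x \<in> ?A" using x W(1) by blast
      have "(x, al x) \<in> r" "(x, rp M S x) \<in> r" unfolding r_def rpe using xA by auto
      then have "(x, al x) \<in> R" "(x, rp M S x) \<in> R" unfolding R_def using rA by auto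
      then show ?thesis using W(2) x by blast
    qed
    then show "W \<in> Lset M S" unfolding Lset_def using W(1) by blast
  next
    fix W assume "W \<in> Lset M S"
    then have W: "W \<subseteq> ?A" "\<forall>x\<in>W. al x \<in> W \<and> rp M S x \<in> W" unfolding Lset_def by auto
    have "y \<in> W" if "x \<in> W" "(x, y) \<in> r\<^sup>*" for x y
      using that(2,1)
    proof (induction rule: rtrancl_induct)
      case base then show ?case .
    next
      case (step a b)
      then show ?case unfolding r_def rpe using W(2) by blast
    qed
    then show "W \<in> {W. W \<subseteq> ?A \<and> (\<forall>x\<in>W. \<forall>y. (x,y)\<in>R \<longrightarrow> y\<in>W)}"
      using W(1) unfolding R_def by blast
  qed
  have "card (Lset M S) = 2 ^ card (?A // R)"
    unfolding cl[symmetric] by (rule card_closed_sets[OF eq]) (use fin in simp)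
  also have "\<dots> = 2 ^ num_curves D al sg M S"
    unfolding num_curves_def q r_def by simp
  finally show ?thesis .
qed

end

lemma neg_pow_div2: "2 \<le> n \<Longrightarrow> (-1::real) ^ ((n - 2) div 2) = - ((-1) ^ (n div 2))"
proof -
  assume "2 \<le> n"
  then obtain m where m: "n = m + 2" by (metis add.commute le_Suc_ex)
  have "(m + 2) div 2 = Suc (m div 2)" by simp
  then show ?thesis unfolding m by simp
qed

context tmap begin

lemma St_al: assumes S: "S \<in> St M" and M: "M \<in> PM" and dM: "d \<in> M" shows "(al d \<in> S) = (d \<in> S)"
proof
  assume "al d \<in> S" then have "al (al d) \<in> S" using S unfolding St_def by blast
  then show "d \<in> S" using dm_facts(1)[OF M dM] by simp
next
  assume "d \<in> S" then show "al d \<in> S" using S unfolding St_def by blast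
qed

lemma lset_iff:
  assumes M: "M \<in> PM" and S: "S \<in> St M" and L: "L \<in> Lset M S" and x: "x \<in> D" "x \<notin> M"
  shows "(x \<in> L) = (rp M S x \<in> L)"
proof
  assume "x \<in> L" then show "rp M S x \<in> L" using L unfolding Lset_def by blast
next
  assume "rp M S x \<in> L" then have "rp M S (rp M S x) \<in> L" using L unfolding Lset_def by blast
  then show "x \<in> L" using rp_rp[OF M S x] by simp
qed

definition bad :: "'d set \<Rightarrow> 'd \<Rightarrow> bool" where
  "bad L d \<longleftrightarrow> (sg d \<in> L) = (sg (sg d) \<in> L) \<and> (sg d \<in> L) = (sg (al d) \<in> L) \<and> (sg d \<in> L) = (sg (sg (al d)) \<in> L)"

lemma valid_bad:
  assumes M: "M \<in> PM" and S: "S \<in> St M" and L: "L \<in> Lset M S" and nG: "L \<notin> Good M"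
  shows "\<exists>d\<in>M. bad L d"
proof -
  have LA: "L \<subseteq> D - M" "\<forall>x\<in>L. al x \<in> L" using L unfolding Lset_def by auto
  then obtain d where d: "d \<in> M" "(sg d \<in> L) = (sg (sg d) \<in> L)" using nG unfolding Good_def by blast
  have f: "sg d \<in> D - M" "sg (sg d) \<in> D - M" using dm_facts[OF M d(1)] by auto
  have i1: "(sg d \<in> L) = (rp M S (sg d) \<in> L)" using lset_iff[OF M S L] f by blast
  have i2: "(sg (sg d) \<in> L) = (rp M S (sg (sg d)) \<in> L)" using lset_iff[OF M S L] f by blast
  have "bad L d" unfolding bad_def using i1 i2 d(2) rp1[OF M d(1), of S] rp2[OF M d(1), of S]
    by (cases "d \<in> S") simp_all
  then show ?thesis using d(1) by blast
qed

lemma SL_St: assumes M: "M \<in> PM" shows "SL M L \<in> St M"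
proof -
  have "al d \<in> SL M L" if d: "d \<in> SL M L" for d
  proof -
    have dM: "d \<in> M" using d unfolding SL_def by blast
    have dD: "d \<in> D" using dm_facts[OF M dM] by simp
    show ?thesis using d pm_al[OF M dM] dD unfolding SL_def by auto
  qed
  then show ?thesis unfolding St_def SL_def by blast
qed

lemma good_unique:
  assumes M: "M \<in> PM" and G: "L \<in> Good M"
  shows "{S \<in> St M. L \<in> Lset M S} = {SL M L}"
proof -
  have LA: "L \<subseteq> D - M" "\<forall>x\<in>L. al x \<in> L" "\<forall>d\<in>M. (sg d \<in> L) \<noteq> (sg (sg d) \<in> L)"
    using G unfolding Good_def by auto
  have inS: "L \<in> Lset M (SL M L)"
  proof -
    have "rp M (SL M L) x \<in> L" if x: "x \<in> L" for x
    proof -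
      have xD: "x \<in> D" "x \<notin> M" using x LA(1) by auto
      show ?thesis using dm_cases[OF M xD]
      proof cases
        case (1 d)
        have ad: "al d \<in> M" using pm_al[OF M 1(1)] .
        show ?thesis using rp1[OF M 1(1), of "SL M L"] LA(3) ad 1 x unfolding SL_def
          by (cases "sg (al d) \<in> L") auto
      next
        case (2 d)
        have ad: "al d \<in> M" using pm_al[OF M 2(1)] .
        show ?thesis using rp2[OF M 2(1), of "SL M L"] LA(3) ad 2 x unfolding SL_def
          by (cases "sg (al d) \<in> L") auto
      qed
    qed
    then show ?thesis unfolding Lset_def using LA by blast
  qed
  have uniq: "S = SL M L" if S: "S \<in> St M" and LS: "L \<in> Lset M S" for S
  proof -
    have SM: "S \<subseteq> M" using S unfolding St_def by blast
    have "(d \<in> S) = (d \<in> SL M L)" if dM: "d \<in> M" for d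
    proof -
      have f: "sg d \<in> D - M" using dm_facts[OF M dM] by auto
      have i1: "(sg d \<in> L) = (rp M S (sg d) \<in> L)" using lset_iff[OF M S LS] f by blast
      have ad: "al d \<in> M" using pm_al[OF M dM] .
      show ?thesis using i1 rp1[OF M dM, of S] LA(3) ad dM unfolding SL_def
        by (cases "d \<in> S") auto
    qed
    then show ?thesis using SM unfolding SL_def by auto
  qed
  show ?thesis using uniq inS SL_St[OF M] by blast
qed

lemma toggle_zero:
  assumes M: "M \<in> PM" and dM: "d \<in> M" and bd: "bad L d"
  shows "(\<Sum>S\<in>{S \<in> St M. L \<in> Lset M S}. (-1::real) ^ (card S div 2)) = 0"
proof -
  let ?V = "{S \<in> St M. L \<in> Lset M S}"
  let ?e = "{d, al d}"
  define tog where "tog S = symd S ?e" for S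
  have dD: "d \<in> D" and ad: "al d \<in> M" and adD: "al d \<in> D" using dm_facts[OF M dM] by auto
  have adne: "al d \<noteq> d" using al_ne[OF dD] .
  have tt: "tog (tog S) = S" for S unfolding tog_def by auto
  have tV: "tog S \<in> ?V" if S: "S \<in> ?V" for S
  proof -
    have SSt: "S \<in> St M" and LS: "L \<in> Lset M S" using S by auto
    have SM: "S \<subseteq> M" using SSt unfolding St_def by blast
    have tM: "tog S \<subseteq> M" unfolding tog_def using SM dM ad by auto
    have tal: "al x \<in> tog S" if x: "x \<in> tog S" for x
    proof -
      have xM: "x \<in> M" using x tM by blast
      have xD: "x \<in> D" using dm_facts[OF M xM] by simp
      have e1: "(al x \<in> S) = (x \<in> S)" using St_al[OF SSt M xM] .
      have e2: "(al x \<in> ?e) = (x \<in> ?e)" using al_inj[OF xD dD] al_inj[OF xD adD] al_al[OF dD] al_al[OF xD] by auto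
      show ?thesis using x e1 e2 unfolding tog_def by simp
    qed
    have tSt: "tog S \<in> St M" unfolding St_def using tM tal by blast
    have LA: "L \<subseteq> D - M" "\<forall>x\<in>L. al x \<in> L" using LS unfolding Lset_def by auto
    let ?Q = "{sg d, sg (sg d), sg (al d), sg (sg (al d))}"
    have Q: "?Q \<subseteq> L" if "y \<in> ?Q" "y \<in> L" for y using bd that unfolding bad_def by auto
    have "rp M (tog S) x \<in> L" if x: "x \<in> L" for x
    proof -
      have xD: "x \<in> D" "x \<notin> M" using x LA(1) by auto
      have same: "(e \<in> tog S) = (e \<in> S)" if "e \<notin> ?e" for e using that unfolding tog_def by simp
      have rl: "rp M S x \<in> L" using LS x unfolding Lset_def by blast
      show ?thesis using dm_cases[OF M xD]
      proof cases
        case (1 e)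
        show ?thesis
        proof (cases "e \<in> ?e")
          case True
          then have "x \<in> ?Q" "rp M (tog S) x \<in> ?Q" using 1 rp1[OF M 1(1), of "tog S"] al_al[OF dD] by auto
          then show ?thesis using Q x by blast
        next
          case False
          then show ?thesis using rl 1 rp1[OF M 1(1), of "tog S"] rp1[OF M 1(1), of S] same[OF False] by simp
        qed
      next
        case (2 e)
        show ?thesis
        proof (cases "e \<in> ?e")
          case True
          then have "x \<in> ?Q" "rp M (tog S) x \<in> ?Q" using 2 rp2[OF M 2(1), of "tog S"] al_al[OF dD] by auto
          then show ?thesis using Q x by blast
        next
          case False
          then show ?thesis using rl 2 rp2[OF M 2(1), of "tog S"] rp2[OF M 2(1), of S] same[OF False] by simp
        qed
      qed
    qed
    then have "L \<in> Lset M (tog S)" unfolding Lset_def using LA by blast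
    then show ?thesis using tSt by blast
  qed
  have sgn: "(-1::real) ^ (card (tog S) div 2) = - ((-1) ^ (card S div 2))" if S: "S \<in> ?V" for S
  proof -
    have SSt: "S \<in> St M" using S by auto
    have SM: "S \<subseteq> M" using SSt unfolding St_def by blast
    have finS: "finite S" using finite_subset[OF subset_trans[OF SM pm_sub[OF M]] fin] .
    show ?thesis
    proof (cases "d \<in> S")
      case True
      then have "al d \<in> S" using SSt unfolding St_def by blast
      then have sub: "?e \<subseteq> S" using True by blast
      have "tog S = S - ?e" unfolding tog_def using sub by auto
      then have c: "card (tog S) = card S - 2" using card_Diff_subset[OF _ sub] adne by simp
      have two: "2 \<le> card S" using card_mono[OF finS sub] adne by simp
      show ?thesis unfolding c using neg_pow_div2[OF two] .
    next
      case False
      then have "al d \<notin> S" using St_al[OF SSt M dM] by simp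
      then have dis: "S \<inter> ?e = {}" using False by blast
      have "tog S = S \<union> ?e" unfolding tog_def using dis by auto
      then have c: "card (tog S) = card S + 2" using card_Un_disjoint[OF finS _ dis] adne by simp
      have two: "2 \<le> card (tog S)" using c by simp
      have "card (tog S) - 2 = card S" using c by simp
      then have "(-1::real) ^ (card S div 2) = - ((-1) ^ (card (tog S) div 2))"
        using neg_pow_div2[OF two] by simp
      then show ?thesis by simp
    qed
  qed
  have bij: "bij_betw tog ?V ?V"
  proof (rule bij_betw_byWitness[where f' = tog])
    show "\<forall>a\<in>?V. tog (tog a) = a" using tt by blast
    show "\<forall>a\<in>?V. tog (tog a) = a" using tt by blast
    show "tog ` ?V \<subseteq> ?V" using tV by blast
    show "tog ` ?V \<subseteq> ?V" using tV by blast
  qed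
  have "(\<Sum>S\<in>?V. (-1::real) ^ (card S div 2)) = (\<Sum>S\<in>?V. (-1::real) ^ (card (tog S) div 2))"
    using sum.reindex_bij_betw[OF bij, of "\<lambda>S. (-1::real) ^ (card S div 2)"] by simp
  also have "\<dots> = - (\<Sum>S\<in>?V. (-1::real) ^ (card S div 2))"
    using sgn by (simp add: sum_negf)
  finally show ?thesis by simp
qed

lemma inner_sum:
  assumes M: "M \<in> PM" and LA: "L \<subseteq> D - M"
    and ev: "L \<in> Good M \<Longrightarrow> even (card (SL M L) div 2)"
  shows "(\<Sum>S\<in>{S \<in> St M. L \<in> Lset M S}. (-1::real) ^ (card S div 2)) = of_bool (L \<in> Good M)"
proof (cases "L \<in> Good M")
  case True
  then show ?thesis using good_unique[OF M True] ev by simp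
next
  case False
  show ?thesis
  proof (cases "\<exists>d\<in>M. bad L d")
    case True
    then obtain d where "d \<in> M" "bad L d" by blast
    then show ?thesis using toggle_zero[OF M] False by simp
  next
    case nb: False
    have e: "{S \<in> St M. L \<in> Lset M S} = {}" using valid_bad[OF M _ _ False] nb by blast
    show ?thesis unfolding e using False by simp
  qed
qed

end

lemma parity_aux2:
  fixes cM cA cL cS cN cAS cAN :: nat
  assumes "even (cM + cA + cL div 2)" "cL = cM" "cM = cS + cN" "cA = cAS + cAN" "cN = 2 * cAN"
    "even cAS" "even cS"
  shows "even (cS div 2)"
  using assms by presburger

lemma real_card_sum: "finite A \<Longrightarrow> X \<subseteq> A \<Longrightarrow> real (card X) = (\<Sum>x\<in>A. of_bool (x \<in> X))"
proof -
  assume f: "finite A" and s: "X \<subseteq> A"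
  have "(\<Sum>x\<in>A. of_bool (x \<in> X) :: real) = (\<Sum>x\<in>A. if x \<in> X then 1 else 0)" by (simp add: of_bool_def)
  also have "\<dots> = (\<Sum>x\<in>{x\<in>A. x \<in> X}. 1)" by (rule sum.inter_filter[OF f, symmetric])
  also have "{x\<in>A. x \<in> X} = X" using s by blast
  finally show ?thesis by simp
qed

context pmap begin

lemma even_SL:
  assumes M: "M \<in> PM" and G: "L \<in> Good M"
  shows "even (card (SL M L) div 2)"
proof -
  have LA: "L \<subseteq> D - M" "\<forall>x\<in>L. al x \<in> L" and gd: "\<forall>d\<in>M. (sg d \<in> L) \<noteq> (sg (sg d) \<in> L)"
    using G unfolding Good_def by auto
  have MD: "M \<subseteq> D" using pm_sub[OF M] .
  have finM: "finite M" using finite_subset[OF MD fin] .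
  have finL: "finite L" using finite_subset[OF _ fin] LA(1) by blast
  let ?P = "{x\<in>D. x \<in> M \<or> sg (sg x) \<in> M}"
  let ?Y = "D - M"
  let ?Z = "M \<union> L"
  have Yal: "\<forall>x\<in>D. (al x \<in> ?Y) = (x \<in> ?Y)" using pm_al_iff[OF M] al_in by auto
  have hP: "\<forall>y\<in>D. ((y \<in> ?P) = (sg y \<in> ?P)) = (y \<notin> ?Y)"
  proof
    fix y assume y: "y \<in> D"
    have o: "of_bool (y \<in> M) + of_bool (sg y \<in> M) + of_bool (sg (sg y) \<in> M) = (1::nat)" using pm_one[OF M y] .
    have "sg y \<in> ?P \<longleftrightarrow> sg y \<in> M \<or> y \<in> M" using sg_in[OF y] sg3[OF y] by simp
    moreover have "y \<in> ?P \<longleftrightarrow> y \<in> M \<or> sg (sg y) \<in> M" using y by simp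
    ultimately show "((y \<in> ?P) = (sg y \<in> ?P)) = (y \<notin> ?Y)" using o y
      by (cases "y \<in> M"; cases "sg y \<in> M"; cases "sg (sg y) \<in> M") simp_all
  qed
  have ZC: "?Z \<in> Cyc"
  proof -
    have ZI: "?Z \<in> Inv al" unfolding Inv_def using MD LA pm_al[OF M] by auto
    have "even (card (vert x \<inter> ?Z))" if x: "x \<in> D" for x
    proof -
      have o: "of_bool (x \<in> M) + of_bool (sg x \<in> M) + of_bool (sg (sg x) \<in> M) = (1::nat)" using pm_one[OF M x] .
      have LM: "\<And>y. y \<in> L \<Longrightarrow> y \<notin> M" using LA(1) by blast
      have "of_bool (x \<in> ?Z) + of_bool (sg x \<in> ?Z) + of_bool (sg (sg x) \<in> ?Z) = (2::nat)"
      proof (cases "x \<in> M")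
        case True
        then have "sg x \<notin> M" "sg (sg x) \<notin> M" using o by auto
        then show ?thesis using gd True by auto
      next
        case F1: False
        show ?thesis
        proof (cases "sg x \<in> M")
          case True
          then have "sg (sg x) \<notin> M" using o by auto
          moreover have "(sg (sg x) \<in> L) \<noteq> (x \<in> L)"
          proof -
            have "(sg (sg x) \<in> L) \<noteq> (sg (sg (sg x)) \<in> L)" using gd True by blast
            then show ?thesis using sg3[OF x] by simp
          qed
          ultimately show ?thesis using F1 True by auto
        next
          case False
          then have T: "sg (sg x) \<in> M" using o F1 by (cases "sg (sg x) \<in> M") auto
          have "(x \<in> L) \<noteq> (sg x \<in> L)"
          proof -
            have "(sg (sg (sg x)) \<in> L) \<noteq> (sg (sg (sg (sg x))) \<in> L)" using gd T by blast
            then show ?thesis using sg3[OF x] by simp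
          qed
          then show ?thesis using F1 False T by auto
        qed
      qed
      then show ?thesis unfolding card_vert[OF x] by simp
    qed
    then have "bd ?Z = {}" unfolding bd_def by blast
    then show ?thesis unfolding Cyc_def using ZI by simp
  qed
  have k: "even (card (?Z \<inter> ?P) + card (?Z \<inter> ?Y) div 2)"
    by (rule key[OF Yal _ hP ZC]) simp
  let ?A' = "{x\<in>L. sg (sg x) \<in> M}"
  let ?A = "{d\<in>M. sg d \<in> L}"
  have ZY: "?Z \<inter> ?Y = L" using LA(1) by auto
  have ZP: "?Z \<inter> ?P = M \<union> ?A'" using LA(1) MD by blast
  have cZP: "card (?Z \<inter> ?P) = card M + card ?A'"
    unfolding ZP by (rule card_Un_disjoint) (use finM finL LA(1) in auto)
  have cA: "card ?A' = card ?A"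
  proof -
    have "sg ` ?A = ?A'"
    proof
      show "sg ` ?A \<subseteq> ?A'"
      proof
        fix y assume "y \<in> sg ` ?A"
        then obtain d where d: "d \<in> M" "sg d \<in> L" "y = sg d" by blast
        then have "sg (sg y) = d" using MD sg3 by blast
        then show "y \<in> ?A'" using d by simp
      qed
      show "?A' \<subseteq> sg ` ?A"
      proof
        fix x assume x: "x \<in> ?A'"
        then have xD: "x \<in> D" using LA(1) by auto
        have e: "x = sg (sg (sg x))" using sg3[OF xD] by simp
        have "sg (sg x) \<in> ?A" using x e by auto
        then show "x \<in> sg ` ?A" using e by (rule rev_image_eqI)
      qed
    qed
    moreover have "inj_on sg ?A" by (rule inj_on_subset[OF inj_sg]) (use MD in auto)
    ultimately show ?thesis using card_image[of sg ?A] by simp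
  qed
  have cLM: "card L = card M"
  proof -
    define h where "h d = (if sg d \<in> L then sg d else sg (sg d))" for d
    define m where "m y = (if sg y \<in> M then sg y else sg (sg y))" for y
    have mh: "m (h d) = d" if d: "d \<in> M" for d
    proof -
      have dD: "d \<in> D" using d MD by blast
      show ?thesis unfolding h_def m_def using pm_M[OF M d] d sg3[OF dD] by auto
    qed
    have "bij_betw h M L"
    proof (rule bij_betw_imageI)
      show "inj_on h M" by (rule inj_on_inverseI[of _ m]) (use mh in blast)
      show "h ` M = L"
      proof
        show "h ` M \<subseteq> L" unfolding h_def using gd by auto
        show "L \<subseteq> h ` M"
        proof
          fix x assume x: "x \<in> L"
          have xD: "x \<in> D" "x \<notin> M" using x LA(1) by auto
          show "x \<in> h ` M" using dm_cases[OF M xD]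
          proof cases
            case (1 e)
            then have "h e = x" unfolding h_def using x by simp
            then show ?thesis using 1(1) by blast
          next
            case (2 e)
            then have "sg e \<notin> L" using gd x by auto
            then have "h e = x" unfolding h_def using 2 by simp
            then show ?thesis using 2(1) by blast
          qed
        qed
      qed
    qed
    then have "card M = card L" by (rule bij_betw_same_card)
    then show ?thesis by simp
  qed
  have evM: "even (card M)" by (rule even_inv_al[OF MD]) (use pm_al[OF M] in blast)
  let ?S = "SL M L"
  let ?N = "M - ?S"
  have SM: "?S \<subseteq> M" unfolding SL_def by blast
  have Sal: "\<forall>x\<in>?S. al x \<in> ?S" using SL_St[OF M] unfolding St_def by blast
  have Sal2: "al x \<in> ?S \<Longrightarrow> x \<in> M \<Longrightarrow> x \<in> ?S" for x
  proof -
    assume a: "al x \<in> ?S" "x \<in> M"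
    then have "al (al x) \<in> ?S" using Sal by blast
    then show "x \<in> ?S" using a(2) MD by auto
  qed
  have Nal: "\<forall>x\<in>?N. al x \<in> ?N" using Sal2 pm_al[OF M] by blast
  have evS: "even (card ?S)" by (rule even_inv_al) (use SM MD Sal in auto)
  have cM: "card M = card ?S + card ?N"
    using card_Diff_subset[OF finite_subset[OF SM finM] SM] card_mono[OF finM SM] by simp
  have cAsplit: "card ?A = card (?A \<inter> ?S) + card (?A \<inter> ?N)"
  proof -
    have "?A = (?A \<inter> ?S) \<union> (?A \<inter> ?N)" by blast
    moreover have "finite ?A" using finM by simp
    moreover have "card ((?A \<inter> ?S) \<union> (?A \<inter> ?N)) = card (?A \<inter> ?S) + card (?A \<inter> ?N)"
      by (rule card_Un_disjoint) (use finM in auto)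
    ultimately show ?thesis by simp
  qed
  have evAS: "even (card (?A \<inter> ?S))"
  proof (rule even_inv_al)
    show "?A \<inter> ?S \<subseteq> D" using MD by auto
    show "\<forall>x\<in>?A \<inter> ?S. al x \<in> ?A \<inter> ?S"
    proof
      fix x assume x: "x \<in> ?A \<inter> ?S"
      then have "al x \<in> ?S" using Sal by blast
      moreover have "sg (al x) \<in> L" using x unfolding SL_def by auto
      moreover have "al x \<in> M" using x pm_al[OF M] by auto
      ultimately show "al x \<in> ?A \<inter> ?S" by blast
    qed
  qed
  have cN: "card ?N = 2 * card (?A \<inter> ?N)"
  proof -
    let ?B = "?A \<inter> ?N"
    have finB: "finite ?B" using finM by simp
    have injB: "inj_on al ?B" by (rule inj_on_subset[OF inj_al]) (use MD in auto)
    have Neq: "?N = ?B \<union> al ` ?B"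
    proof
      show "?N \<subseteq> ?B \<union> al ` ?B"
      proof
        fix d assume d: "d \<in> ?N"
        then have dM: "d \<in> M" and dD: "d \<in> D" and ne: "(sg d \<in> L) \<noteq> (sg (al d) \<in> L)"
          using MD unfolding SL_def by auto
        show "d \<in> ?B \<union> al ` ?B"
        proof (cases "sg d \<in> L")
          case True then show ?thesis using d by blast
        next
          case False
          then have "sg (al d) \<in> L" using ne by simp
          moreover have "al d \<in> ?N" using Nal d by blast
          ultimately have "al d \<in> ?B" by blast
          then have "al (al d) \<in> al ` ?B" by blast
          then show ?thesis using al_al[OF dD] by simp
        qed
      qed
      show "?B \<union> al ` ?B \<subseteq> ?N" using Nal by blast
    qed
    have dis: "?B \<inter> al ` ?B = {}"
    proof (rule ccontr)
      assume "?B \<inter> al ` ?B \<noteq> {}"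
      then obtain d d' where "d \<in> ?B" "d' \<in> ?B" "d = al d'" by blast
      moreover then have "d' \<in> D" using MD by auto
      ultimately show False unfolding SL_def by auto
    qed
    have "card (?B \<union> al ` ?B) = card ?B + card (al ` ?B)" by (rule card_Un_disjoint) (use finB dis in auto)
    then have "card ?N = card ?B + card (al ` ?B)" using arg_cong[of _ _ card, OF Neq] by (rule trans[rotated])
    then show ?thesis using card_image[OF injB] by simp
  qed
  show ?thesis
    by (rule parity_aux2[OF _ cLM cM cAsplit cN evAS evS]) (use k ZY cZP cA in simp)
qed

lemma tfp:
  assumes M: "M \<in> PM"
  shows "two_factor_poly D al sg M 1 = real (card (Good M))"
proof -
  let ?f = "\<lambda>S. (-1::real) ^ (card S div 2)"
  let ?PL = "Pow (D - M)"
  have finPL: "finite ?PL" using fin by simp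
  have finSt: "finite (St M)"
  proof -
    have "St M \<subseteq> Pow D" unfolding St_def using pm_sub[OF M] by auto
    then show ?thesis using fin finite_subset by blast
  qed
  have "two_factor_poly D al sg M 1 = (\<Sum>S\<in>St M. ?f S * 2 ^ num_curves D al sg M S)"
    unfolding two_factor_poly_def St_def by simp
  also have "\<dots> = (\<Sum>S\<in>St M. ?f S * real (card (Lset M S)))"
    by (rule sum.cong[OF refl]) (simp add: nc_card[OF M])
  also have "\<dots> = (\<Sum>S\<in>St M. (\<Sum>L\<in>?PL. if L \<in> Lset M S then ?f S else 0))"
  proof (rule sum.cong[OF refl])
    fix S assume "S \<in> St M"
    have "Lset M S \<subseteq> ?PL" unfolding Lset_def by auto
    then have "real (card (Lset M S)) = (\<Sum>L\<in>?PL. of_bool (L \<in> Lset M S))" by (rule real_card_sum[OF finPL])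
    then show "?f S * real (card (Lset M S)) = (\<Sum>L\<in>?PL. if L \<in> Lset M S then ?f S else 0)"
      by (simp add: sum_distrib_left of_bool_def if_distrib cong: if_cong)
  qed
  also have "\<dots> = (\<Sum>L\<in>?PL. (\<Sum>S\<in>St M. if L \<in> Lset M S then ?f S else 0))"
    by (rule sum.swap)
  also have "\<dots> = (\<Sum>L\<in>?PL. (\<Sum>S\<in>{S \<in> St M. L \<in> Lset M S}. ?f S))"
    by (rule sum.cong[OF refl]) (rule sum.inter_filter[OF finSt, symmetric])
  also have "\<dots> = (\<Sum>L\<in>?PL. of_bool (L \<in> Good M))"
  proof (rule sum.cong[OF refl])
    fix L assume "L \<in> ?PL"
    then have "L \<subseteq> D - M" by simp
    then show "(\<Sum>S\<in>{S \<in> St M. L \<in> Lset M S}. ?f S) = of_bool (L \<in> Good M)"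
      by (rule inner_sum[OF M]) (rule even_SL[OF M])
  qed
  also have "\<dots> = real (card (Good M))"
    by (rule real_card_sum[OF finPL, symmetric]) (auto simp: Good_def)
  finally show ?thesis .
qed

end

lemma col3:
  fixes a b c :: nat
  assumes "a < 3" "b < 3" "c < 3" "a \<noteq> b" "b \<noteq> c" "a \<noteq> c"
  shows "of_bool (a = 0) + of_bool (b = 0) + of_bool (c = 0) = (1::nat)"
  using assms by (auto simp: of_bool_def)

context tmap begin

definition tait_F :: "('d \<Rightarrow> nat) \<Rightarrow> 'd set \<times> 'd set" where
  "tait_F c = ({x\<in>D. c x = 0}, {x\<in>D. c x = 1})"

definition tait_G :: "'d set \<times> 'd set \<Rightarrow> 'd \<Rightarrow> nat" where
  "tait_G p = (\<lambda>x. if x \<in> D then (if x \<in> fst p then 0 else if x \<in> snd p then 1 else 2) else 0)"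

lemma tait_props:
  assumes c: "c \<in> tait_colorings D al sg" and x: "x \<in> D"
  shows "c x < 3" "c (al x) = c x" "c (sg x) \<noteq> c x" "c (sg (sg x)) \<noteq> c (sg x)" "c (sg (sg x)) \<noteq> c x"
    "c (sg x) < 3" "c (sg (sg x)) < 3"
proof -
  have h: "\<forall>x\<in>D. c x < 3 \<and> c (al x) = c x \<and> c (sg x) \<noteq> c x"
    using c unfolding tait_colorings_def by blast
  show "c x < 3" "c (al x) = c x" "c (sg x) \<noteq> c x" using h x by auto
  show "c (sg (sg x)) \<noteq> c (sg x)" "c (sg x) < 3" using h sg_in[OF x] by auto
  show "c (sg (sg x)) < 3" using h sg_sg_in[OF x] by auto
  have "c (sg (sg (sg x))) \<noteq> c (sg (sg x))" using h sg_sg_in[OF x] by auto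
  then show "c (sg (sg x)) \<noteq> c x" using sg3[OF x] by simp
qed

lemma tait_bij: "bij_betw tait_F (tait_colorings D al sg) (Sigma PM Good)"
proof (rule bij_betw_byWitness[where f' = tait_G])
  show "\<forall>c\<in>tait_colorings D al sg. tait_G (tait_F c) = c"
  proof
    fix c assume c: "c \<in> tait_colorings D al sg"
    show "tait_G (tait_F c) = c"
    proof
      fix x show "tait_G (tait_F c) x = c x"
      proof (cases "x \<in> D")
        case True
        then have "c x < 3" using tait_props[OF c] by blast
        then show ?thesis unfolding tait_G_def tait_F_def using True by auto
      next
        case False
        then show ?thesis unfolding tait_G_def tait_F_def using c unfolding tait_colorings_def by auto
      qed
    qed
  qed
  show "\<forall>p\<in>Sigma PM Good. tait_F (tait_G p) = p"
  proof
    fix p assume p: "p \<in> Sigma PM Good"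
    obtain M L where pML: "p = (M, L)" by (cases p)
    have M: "M \<in> PM" and G: "L \<in> Good M" using p pML by auto
    have "{x\<in>D. tait_G (M, L) x = 0} = M" unfolding tait_G_def using pm_sub[OF M] by auto
    moreover have "{x\<in>D. tait_G (M, L) x = 1} = L" unfolding tait_G_def using G unfolding Good_def by auto
    ultimately show "tait_F (tait_G p) = p" unfolding tait_F_def pML by simp
  qed
  show "tait_F ` tait_colorings D al sg \<subseteq> Sigma PM Good"
  proof
    fix p assume "p \<in> tait_F ` tait_colorings D al sg"
    then obtain c where c: "c \<in> tait_colorings D al sg" and pc: "p = tait_F c" by blast
    let ?M = "{x\<in>D. c x = 0}" and ?L = "{x\<in>D. c x = 1}"
    have "perfect_matching D al sg ?M"
      unfolding perfect_matching_def
    proof (intro conjI ballI)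
      show "?M \<subseteq> D" by blast
      fix x assume x: "x \<in> D"
      have "card ({x, sg x, sg (sg x)} \<inter> ?M) = of_bool (x \<in> ?M) + of_bool (sg x \<in> ?M) + of_bool (sg (sg x) \<in> ?M)"
        by (rule card3) (use sg_ne[OF x] sg2_ne[OF x] sg2_ne'[OF x] in metis)+
      also have "\<dots> = of_bool (c x = 0) + of_bool (c (sg x) = 0) + of_bool (c (sg (sg x)) = 0)"
        using x sg_in[OF x] sg_sg_in[OF x] by simp
      also have "\<dots> = 1" by (rule col3) (use tait_props[OF c x] in auto)
      finally show "card ({x, sg x, sg (sg x)} \<inter> ?M) = 1" .
    next
      fix x assume "x \<in> ?M"
      then show "al x \<in> ?M" using tait_props[OF c] al_in by auto
    qed
    then have M: "?M \<in> PM" unfolding PM_def by simp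
    have g1: "?L \<subseteq> D - ?M" by auto
    have g2: "\<forall>x\<in>?L. al x \<in> ?L" using tait_props[OF c] al_in by auto
    have g3: "\<forall>d\<in>?M. (sg d \<in> ?L) \<noteq> (sg (sg d) \<in> ?L)"
    proof
      fix d assume d: "d \<in> ?M"
      then have dD: "d \<in> D" by simp
      have "c (sg d) \<noteq> 0" "c (sg (sg d)) \<noteq> 0" "c (sg d) \<noteq> c (sg (sg d))" "c (sg d) < 3" "c (sg (sg d)) < 3"
        using tait_props[OF c dD] d by auto
      then show "(sg d \<in> ?L) \<noteq> (sg (sg d) \<in> ?L)" using sg_in[OF dD] sg_sg_in[OF dD] by auto
    qed
    have "?L \<in> Good ?M" unfolding Good_def using g1 g2 g3 by blast
    then show "p \<in> Sigma PM Good" unfolding pc tait_F_def using M by simp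
  qed
  show "tait_G ` Sigma PM Good \<subseteq> tait_colorings D al sg"
  proof
    fix c assume "c \<in> tait_G ` Sigma PM Good"
    then obtain M L where hML: "M \<in> PM" "L \<in> Good M" and cG: "c = tait_G (M, L)" by blast
    have LA: "L \<subseteq> D - M" "\<forall>x\<in>L. al x \<in> L" and gd: "\<forall>d\<in>M. (sg d \<in> L) \<noteq> (sg (sg d) \<in> L)"
      using hML(2) unfolding Good_def by auto
    have cx: "c x = (if x \<in> M then 0 else if x \<in> L then 1 else 2)" if "x \<in> D" for x
      unfolding cG tait_G_def using that by simp
    have "c x < 3 \<and> c (al x) = c x \<and> c (sg x) \<noteq> c x" if x: "x \<in> D" for x
    proof (intro conjI)
      show "c x < 3" using cx[OF x] by simp
      have "(al x \<in> M) = (x \<in> M)" using pm_al_iff[OF hML(1) x] .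
      moreover have "(al x \<in> L) = (x \<in> L)"
      proof
        assume "al x \<in> L" then have "al (al x) \<in> L" using LA(2) by blast
        then show "x \<in> L" using x by simp
      qed (use LA(2) in blast)
      ultimately show "c (al x) = c x" using cx[OF x] cx[OF al_in[OF x]] by simp
      have o: "of_bool (x \<in> M) + of_bool (sg x \<in> M) + of_bool (sg (sg x) \<in> M) = (1::nat)"
        using pm_one[OF hML(1) x] .
      have sx: "sg x \<in> D" using sg_in[OF x] .
      show "c (sg x) \<noteq> c x"
      proof (cases "x \<in> M")
        case True
        then have "sg x \<notin> M" using o by auto
        then show ?thesis using cx[OF x] cx[OF sx] True by auto
      next
        case F1: False
        show ?thesis
        proof (cases "sg x \<in> M")
          case True then show ?thesis using cx[OF x] cx[OF sx] F1 by auto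
        next
          case False
          then have T: "sg (sg x) \<in> M" using o F1 by (cases "sg (sg x) \<in> M") auto
          have "(sg (sg (sg x)) \<in> L) \<noteq> (sg (sg (sg (sg x))) \<in> L)" using gd T by blast
          then have "(x \<in> L) \<noteq> (sg x \<in> L)" using sg3[OF x] by simp
          then show ?thesis using cx[OF x] cx[OF sx] F1 False by auto
        qed
      qed
    qed
    moreover have "\<forall>x. x \<notin> D \<longrightarrow> c x = 0" unfolding cG tait_G_def by simp
    ultimately show "c \<in> tait_colorings D al sg" unfolding tait_colorings_def by blast
  qed
qed

lemma finite_PM: "finite PM"
proof -
  have "PM \<subseteq> Pow D" unfolding PM_def perfect_matching_def by auto
  then show ?thesis using fin finite_subset by blast
qed

lemma finite_Good: "finite (Good M)"
proof -
  have "Good M \<subseteq> Pow D" unfolding Good_def by auto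
  then show ?thesis using fin finite_subset by blast
qed

end

context pmap begin

lemma main: "T_poly D al sg 1 = real (card (tait_colorings D al sg))"
proof -
  have "T_poly D al sg 1 = (\<Sum>M\<in>PM. two_factor_poly D al sg M 1)"
    unfolding T_poly_def PM_def ..
  also have "\<dots> = (\<Sum>M\<in>PM. real (card (Good M)))"
    by (rule sum.cong[OF refl]) (rule tfp)
  also have "\<dots> = real (\<Sum>M\<in>PM. card (Good M))" by simp
  also have "(\<Sum>M\<in>PM. card (Good M)) = card (Sigma PM Good)"
    using finite_PM finite_Good by simp
  also have "card (Sigma PM Good) = card (tait_colorings D al sg)"
    using bij_betw_same_card[OF tait_bij] by simp
  finally show ?thesis .
qed

end

theorem theorem1p6:
  fixes D :: "'d set" and alpha sigma :: "'d \<Rightarrow> 'd"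
  assumes "trivalent_map D alpha sigma"
    and "connected_map D alpha sigma"
    and "planar_map D alpha sigma"
  shows "T_poly D alpha sigma 1 = real (card (tait_colorings D alpha sigma))"
proof -
  interpret pmap D alpha sigma
    using assms by (unfold_locales) auto
  show ?thesis by (rule main)
qed

end
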